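(* Let $\mathcal{M}$ with $H\ge5$, deterministic expert $\pi^{\operatorname{E}}$ and abstractions $\{\phi_h\}$ satisfy the bisimulation and $\pi^{\operatorname{E}}$-irrelevance assumption in the context. Let $\mathcal{D}$ be $m$ i.i.d. expert trajectories, divided into disjoint $\mathcal{D}_1,\mathcal{D}_1^c$ with $|\mathcal{D}_1|=|\mathcal{D}_1^c|=m/2$. Let $\pi'^{\phi}$ be the abstract BC policy on $\mathcal{D}_1$, and, with $\pi'^\phi$ fixed, let $\mathcal{D}'_{\mathrm{env}}$ be $n'$ trajectories collected by $[\pi'^\phi]^M$. Fix $\varepsilon,\delta\in(0,1)$ and let $\widetilde d^\phi_h$ be the abstract estimator defined in the context. If $m\gtrsim\frac{H^{3/2}|\Phi|}{\varepsilon}\log\big(\frac{|\Phi|H}{\delta}\big)$ and $n'\gtrsim\frac{H^2|\Phi|}{\varepsilon^2}\log\big(\frac{|\Phi|H}{\delta}\big)$, then with probability at least $1-\delta$, $\sum_{h=1}^H\|\widetilde d^\phi_h-d_h^{\pi^{\operatorname{E}},\phi}\|_1\le\varepsilon$.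
   Context: Episodic MDP $(\mathcal{S},\mathcal{A},P,r,H,\rho)$, finite spaces, $r_h\in[0,1]$; trajectories $\operatorname{tr}=(s_1,a_1,\dots,s_H,a_H)$, $\operatorname{tr}_h=(s_1,a_1,\dots,s_h,a_h)$; $d_h^\pi(s,a)$ is the step-$h$ state-action distribution. Abstractions $\phi_h:\mathcal{S}\to\Phi$, $\Phi$ finite, $\phi_h^{-1}(x)=\{s:\phi_h(s)=x\}$. Assumption: for all $h$ and $s^1,s^2$ with $\phi_h(s^1)=\phi_h(s^2)$, for all $a,x'$: $r_h(s^1,a)=r_h(s^2,a)$, $\sum_{s'\in\phi_{h+1}^{-1}(x')}P_h(s'|s^1,a)=\sum_{s'\in\phi_{h+1}^{-1}(x')}P_h(s'|s^2,a)$, and $\pi^{\operatorname{E}}_h(s^1)=\pi^{\operatorname{E}}_h(s^2)$. $d_h^{\pi^{\operatorname{E}},\phi}(x,a)=\sum_{s\in\phi_h^{-1}(x)}d_h^{\pi^{\operatorname{E}}}(s,a)$. Abstract BC policy: $\pi'^\phi_h(a|x)=n_h^1(x,a)/n_h^1(x)$ if $n_h^1(x)>0$ and $1/|\mathcal{A}|$ otherwise, where $n_h^1(x,a)$ (resp. $n_h^1(x)$) is the number of trajectories in $\mathcal{D}_1$ with $\phi_h(s_h)=x,a_h=a$ (resp. $\phi_h(s_h)=x$); lift $[\pi^\phi]^M_h(a|s)=\pi^\phi_h(a|\phi_h(s))$. $\Phi_h(\mathcal{D}_1)=\{\phi_h(s_h):\operatorname{tr}\in\mathcal{D}_1\}$,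 $\mathbf{Tr}_h^{\mathcal{D}_1,\phi}=\{(s_1,a_1,\dots,s_h,a_h):\phi_\ell(s_\ell)\in\Phi_\ell(\mathcal{D}_1)\ \forall\ell\le h\}$. Estimator: $\widetilde d^\phi_h(x,a)=\frac1{n'}\sum_{\operatorname{tr}\in\mathcal{D}'_{\mathrm{env}}}\mathbb{I}\{\phi_h(s_h)=x,a_h=a,\operatorname{tr}_h\in\mathbf{Tr}_h^{\mathcal{D}_1,\phi}\}+\frac{2}{m}\sum_{\operatorname{tr}\in\mathcal{D}_1^c}\mathbb{I}\{\phi_h(s_h)=x,a_h=a,\operatorname{tr}_h\notin\mathbf{Tr}_h^{\mathcal{D}_1,\phi}\}$. $a\gtrsim b$ means $a\ge Cb$ for a sufficiently large universal constant $C$. *)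

theory Defs
  imports "HOL-Probability.Probability"
begin

text \<open>
  States, actions and abstract states are natural numbers drawn from
  finite carrier sets S, A and X (= Phi). Steps are h = 1..H. A trajectory is a list
  of state-action pairs of length H; its (h-1)-th entry (0-based) is (s_h, a_h).
  A (Markov, possibly stochastic) policy is pi :: nat => nat => nat pmf (step, state);
  the transition kernel is P :: nat => nat => nat => nat pmf (step, state, action);
  the initial distribution is rho :: nat pmf.
\<close>

type_synonym traj = "(nat \<times> nat) list"

fun gen_traj :: "(nat \<Rightarrow> nat \<Rightarrow> nat \<Rightarrow> nat pmf) \<Rightarrow> (nat \<Rightarrow> nat \<Rightarrow> nat pmf)
                 \<Rightarrow> nat \<Rightarrow> nat \<Rightarrow> nat \<Rightarrow> traj pmf" where
  "gen_traj P pol h 0 s = return_pmf []"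
| "gen_traj P pol h (Suc k) s =
     do { a \<leftarrow> pol h s; s' \<leftarrow> P h s a; rest \<leftarrow> gen_traj P pol (Suc h) k s';
          return_pmf ((s, a) # rest) }"

definition traj_dist :: "nat pmf \<Rightarrow> (nat \<Rightarrow> nat \<Rightarrow> nat \<Rightarrow> nat pmf) \<Rightarrow> (nat \<Rightarrow> nat \<Rightarrow> nat pmf)
                          \<Rightarrow> nat \<Rightarrow> traj pmf" where
  "traj_dist \<rho> P pol H = do { s \<leftarrow> \<rho>; gen_traj P pol 1 H s }"

definition occ :: "nat pmf \<Rightarrow> (nat \<Rightarrow> nat \<Rightarrow> nat \<Rightarrow> nat pmf) \<Rightarrow> (nat \<Rightarrow> nat \<Rightarrow> nat pmf)
                    \<Rightarrow> nat \<Rightarrow> nat \<Rightarrow> nat \<Rightarrow> nat \<Rightarrow> real" where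
  "occ \<rho> P pol H h s a = measure_pmf.prob (traj_dist \<rho> P pol H) {tr. tr ! (h - 1) = (s, a)}"

definition det_policy :: "(nat \<Rightarrow> nat \<Rightarrow> nat) \<Rightarrow> nat \<Rightarrow> nat \<Rightarrow> nat pmf" where
  "det_policy \<pi> h s = return_pmf (\<pi> h s)"

definition abs_occ :: "nat set \<Rightarrow> nat pmf \<Rightarrow> (nat \<Rightarrow> nat \<Rightarrow> nat \<Rightarrow> nat pmf) \<Rightarrow> (nat \<Rightarrow> nat \<Rightarrow> nat)
                        \<Rightarrow> (nat \<Rightarrow> nat \<Rightarrow> nat) \<Rightarrow> nat \<Rightarrow> nat \<Rightarrow> nat \<Rightarrow> nat \<Rightarrow> real" where
  "abs_occ S \<rho> P \<pi>E \<phi> H h x a =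
     (\<Sum>s\<in>{s\<in>S. \<phi> h s = x}. occ \<rho> P (det_policy \<pi>E) H h s a)"

definition cnt_xa :: "(nat \<Rightarrow> nat \<Rightarrow> nat) \<Rightarrow> traj list \<Rightarrow> nat \<Rightarrow> nat \<Rightarrow> nat \<Rightarrow> nat" where
  "cnt_xa \<phi> D h x a = length (filter (\<lambda>tr. \<phi> h (fst (tr ! (h - 1))) = x \<and> snd (tr ! (h - 1)) = a) D)"

definition cnt_x :: "(nat \<Rightarrow> nat \<Rightarrow> nat) \<Rightarrow> traj list \<Rightarrow> nat \<Rightarrow> nat \<Rightarrow> nat" where
  "cnt_x \<phi> D h x = length (filter (\<lambda>tr. \<phi> h (fst (tr ! (h - 1))) = x) D)"

definition abs_bc :: "nat set \<Rightarrow> (nat \<Rightarrow> nat \<Rightarrow> nat) \<Rightarrow> traj list \<Rightarrow> nat \<Rightarrow> nat \<Rightarrow> nat pmf" where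
  "abs_bc A \<phi> D h x =
     (if cnt_x \<phi> D h x > 0
      then pmf_of_multiset (mset (map (\<lambda>tr. snd (tr ! (h - 1)))
                                 (filter (\<lambda>tr. \<phi> h (fst (tr ! (h - 1))) = x) D)))
      else pmf_of_set A)"

definition lift_policy :: "(nat \<Rightarrow> nat \<Rightarrow> nat pmf) \<Rightarrow> (nat \<Rightarrow> nat \<Rightarrow> nat) \<Rightarrow> nat \<Rightarrow> nat \<Rightarrow> nat pmf" where
  "lift_policy \<pi> \<phi> h s = \<pi> h (\<phi> h s)"

definition in_Tr :: "(nat \<Rightarrow> nat \<Rightarrow> nat) \<Rightarrow> traj list \<Rightarrow> nat \<Rightarrow> traj \<Rightarrow> bool" where
  "in_Tr \<phi> D1 h tr =
     (\<forall>l\<in>{1..h}. \<phi> l (fst (tr ! (l - 1))) \<in> {\<phi> l (fst (tr' ! (l - 1))) | tr'. tr' \<in> set D1})"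

text \<open>The estimator tilde d_h^phi(x,a) with n' = |Denv| and m = total number of expert trajectories.\<close>
definition est :: "(nat \<Rightarrow> nat \<Rightarrow> nat) \<Rightarrow> nat \<Rightarrow> traj list \<Rightarrow> traj list \<Rightarrow> traj list
                    \<Rightarrow> nat \<Rightarrow> nat \<Rightarrow> nat \<Rightarrow> real" where
  "est \<phi> m D1 D1c Denv h x a =
     (1 / real (length Denv)) *
       real (length (filter (\<lambda>tr. \<phi> h (fst (tr ! (h - 1))) = x \<and> snd (tr ! (h - 1)) = a
                                  \<and> in_Tr \<phi> D1 h tr) Denv))
   + (2 / real m) *
       real (length (filter (\<lambda>tr. \<phi> h (fst (tr ! (h - 1))) = x \<and> snd (tr ! (h - 1)) = a
                                  \<and> \<not> in_Tr \<phi> D1 h tr) D1c))"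

text \<open>Joint law of (D1, D1^c, D'_env): D1 and D1^c are m/2 i.i.d. expert trajectories each
  (disjoint halves of D), and given D1, D'_env consists of n' i.i.d. trajectories of the
  lifted abstract BC policy trained on D1.\<close>
definition sample_law :: "nat set \<Rightarrow> nat pmf \<Rightarrow> (nat \<Rightarrow> nat \<Rightarrow> nat \<Rightarrow> nat pmf) \<Rightarrow> (nat \<Rightarrow> nat \<Rightarrow> nat)
                          \<Rightarrow> (nat \<Rightarrow> nat \<Rightarrow> nat) \<Rightarrow> nat \<Rightarrow> nat \<Rightarrow> nat
                          \<Rightarrow> (traj list \<times> traj list \<times> traj list) pmf" where
  "sample_law A \<rho> P \<pi>E \<phi> H m n' =
     do { D1 \<leftarrow> replicate_pmf (m div 2) (traj_dist \<rho> P (det_policy \<pi>E) H);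
          D1c \<leftarrow> replicate_pmf (m div 2) (traj_dist \<rho> P (det_policy \<pi>E) H);
          Denv \<leftarrow> replicate_pmf n' (traj_dist \<rho> P (lift_policy (abs_bc A \<phi> D1) \<phi>) H);
          return_pmf (D1, D1c, Denv) }"

definition valid_setting :: "nat set \<Rightarrow> nat set \<Rightarrow> nat set \<Rightarrow> nat pmf \<Rightarrow> (nat \<Rightarrow> nat \<Rightarrow> nat \<Rightarrow> nat pmf)
                         \<Rightarrow> (nat \<Rightarrow> nat \<Rightarrow> nat \<Rightarrow> real) \<Rightarrow> (nat \<Rightarrow> nat \<Rightarrow> nat) \<Rightarrow> (nat \<Rightarrow> nat \<Rightarrow> nat)
                         \<Rightarrow> nat \<Rightarrow> bool" where
  "valid_setting S A X \<rho> P r \<pi>E \<phi> H \<longleftrightarrow>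
     finite S \<and> S \<noteq> {} \<and> finite A \<and> A \<noteq> {} \<and> finite X \<and> X \<noteq> {} \<and>
     set_pmf \<rho> \<subseteq> S \<and>
     (\<forall>h\<in>{1..H}. \<forall>s\<in>S. \<forall>a\<in>A. set_pmf (P h s a) \<subseteq> S) \<and>
     (\<forall>h\<in>{1..H}. \<forall>s\<in>S. \<forall>a\<in>A. 0 \<le> r h s a \<and> r h s a \<le> 1) \<and>
     (\<forall>h\<in>{1..H}. \<forall>s\<in>S. \<pi>E h s \<in> A) \<and>
     (\<forall>h\<in>{1..Suc H}. \<forall>s\<in>S. \<phi> h s \<in> X) \<and>
     (\<forall>h\<in>{1..H}. \<forall>s1\<in>S. \<forall>s2\<in>S. \<phi> h s1 = \<phi> h s2 \<longrightarrow>
        (\<forall>a\<in>A. r h s1 a = r h s2 a \<and>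
           (\<forall>x'\<in>X. (\<Sum>s'\<in>{s'\<in>S. \<phi> (Suc h) s' = x'}. pmf (P h s1 a) s')
                  = (\<Sum>s'\<in>{s'\<in>S. \<phi> (Suc h) s' = x'}. pmf (P h s2 a) s'))) \<and>
        \<pi>E h s1 = \<pi>E h s2)"

definition total_err :: "nat set \<Rightarrow> nat set \<Rightarrow> nat set \<Rightarrow> nat pmf \<Rightarrow> (nat \<Rightarrow> nat \<Rightarrow> nat \<Rightarrow> nat pmf)
                         \<Rightarrow> (nat \<Rightarrow> nat \<Rightarrow> nat) \<Rightarrow> (nat \<Rightarrow> nat \<Rightarrow> nat) \<Rightarrow> nat \<Rightarrow> nat
                         \<Rightarrow> traj list \<Rightarrow> traj list \<Rightarrow> traj list \<Rightarrow> real" where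
  "total_err S A X \<rho> P \<pi>E \<phi> H m D1 D1c Denv =
     (\<Sum>h=1..H. \<Sum>x\<in>X. \<Sum>a\<in>A. \<bar>est \<phi> m D1 D1c Denv h x a - abs_occ S \<rho> P \<pi>E \<phi> H h x a\<bar>)"

end

theory Submission
  imports Defs
begin

lemma exp_le_quad:
  fixes s :: real assumes "\<bar>s\<bar> \<le> 1" shows "exp s \<le> 1 + s + s\<^sup>2"
proof (cases "s \<ge> 0")
  case True thus ?thesis using exp_bound[of s] assms by auto
next
  case False
  hence s: "s < 0" by simp
  have e: "1 - s \<le> exp (-s)" using exp_ge_add_one_self[of "-s"] by simp
  have pos: "0 < 1 - s" using s by simp
  have "exp s = 1 / exp (-s)" by (simp add: exp_minus field_simps)
  also have "\<dots> \<le> 1 / (1 - s)" using e pos by (intro divide_left_mono) auto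
  also have "\<dots> \<le> 1 + s + s\<^sup>2"
  proof -
    have e3: "(1 - s) * (1 + s + s\<^sup>2) = 1 - s ^ 3"
      by (simp add: algebra_simps power2_eq_square power3_eq_cube)
    have "s ^ 3 < 0" using s by (simp add: power_less_zero_eq)
    hence "1 \<le> (1 - s) * (1 + s + s\<^sup>2)" using e3 by simp
    thus ?thesis using pos by (simp add: divide_le_eq mult.commute)
  qed
  finally show ?thesis .
qed

lemma binom_mgf:
  assumes q: "q \<in> {0..1}"
  shows "(\<integral>k. exp (s * real k) \<partial>measure_pmf (binomial_pmf n q)) = (1 - q + q * exp s) ^ n"
proof -
  have "(\<integral>k. exp (s * real k) \<partial>measure_pmf (binomial_pmf n q))
       = (\<Sum>k\<in>{..n}. exp (s * real k) * pmf (binomial_pmf n q) k)"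
    using q by (intro integral_measure_pmf_real) (auto simp: set_pmf_binomial_eq split: if_splits)
  also have "\<dots> = (\<Sum>k\<in>{..n}. of_nat (n choose k) * (q * exp s) ^ k * (1 - q) ^ (n - k))"
    using q by (intro sum.cong refl) (simp add: power_mult_distrib exp_of_nat_mult[symmetric] mult.commute mult.left_commute)
  also have "\<dots> = (q * exp s + (1 - q)) ^ n" by (simp add: binomial_ring)
  finally show ?thesis by (simp add: add.commute)
qed

lemma binom_chernoff:
  assumes q: "q \<in> {0..1}" and s: "\<bar>s\<bar> \<le> 1"
  shows "measure_pmf.prob (binomial_pmf n q) {k. s * (real k - n * q) \<ge> s\<^sup>2 * n * q + L} \<le> exp (-L)"
proof -
  let ?M = "measure_pmf (binomial_pmf n q)"
  let ?c = "exp (s * n * q + s\<^sup>2 * n * q + L)"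
  have set: "{k. s * (real k - n * q) \<ge> s\<^sup>2 * n * q + L} = {k \<in> space ?M. exp (s * real k) \<ge> ?c}"
    by (auto simp: algebra_simps)
  have int: "integrable ?M (\<lambda>k. exp (s * real k))"
    using q by (intro integrable_measure_pmf_finite) auto
  have "measure ?M {k \<in> space ?M. exp (s * real k) \<ge> ?c} \<le> (\<integral>k. exp (s * real k) \<partial>?M) / ?c"
    by (rule integral_Markov_inequality_measure[OF int]) auto
  also have "(\<integral>k. exp (s * real k) \<partial>?M) = (1 - q + q * exp s) ^ n" using binom_mgf[OF q] .
  also have "\<dots> \<le> exp (q * (exp s - 1)) ^ n"
  proof (rule power_mono)
    show "1 - q + q * exp s \<le> exp (q * (exp s - 1))" using exp_ge_add_one_self[of "q * (exp s - 1)"]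
      by (simp add: algebra_simps)
    show "0 \<le> 1 - q + q * exp s" using q by (smt (verit) atLeastAtMost_iff exp_gt_zero mult_nonneg_nonneg)
  qed
  also have "\<dots> = exp (n * q * (exp s - 1))" by (simp add: exp_of_nat_mult[symmetric] mult.assoc)
  also have "\<dots> \<le> exp (n * q * (s + s\<^sup>2))"
    using exp_le_quad[OF s] q by (intro exp_mono mult_left_mono) auto
  finally have "measure ?M {k \<in> space ?M. exp (s * real k) \<ge> ?c} \<le> exp (n * q * (s + s\<^sup>2)) / ?c"
    by (simp add: divide_right_mono)
  also have "\<dots> = exp (-L)" by (simp add: exp_diff[symmetric] algebra_simps)
  finally show ?thesis by (simp only: set)
qed

lemma binom_two_sided:
  assumes q: "q \<in> {0..1}" and b: "0 < \<beta>" "\<beta> \<le> 1"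
  shows "measure_pmf.prob (binomial_pmf n q) {k. \<bar>real k - n * q\<bar> > \<beta> * n * q + L / \<beta>} \<le> 2 * exp (-L)"
proof -
  let ?M = "binomial_pmf n q"
  have sub: "{k. \<bar>real k - n * q\<bar> > \<beta> * n * q + L / \<beta>} \<subseteq>
      {k. \<beta> * (real k - n * q) \<ge> \<beta>\<^sup>2 * n * q + L} \<union> {k. (-\<beta>) * (real k - n * q) \<ge> (-\<beta>)\<^sup>2 * n * q + L}"
  proof
    fix k assume "k \<in> {k. \<bar>real k - n * q\<bar> > \<beta> * n * q + L / \<beta>}"
    hence h: "\<bar>real k - n * q\<bar> > \<beta> * n * q + L / \<beta>" by simp
    have e: "\<beta> * (\<beta> * n * q + L / \<beta>) = \<beta>\<^sup>2 * n * q + L" using b by (simp add: field_simps power2_eq_square)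
    show "k \<in> {k. \<beta> * (real k - n * q) \<ge> \<beta>\<^sup>2 * n * q + L} \<union> {k. (-\<beta>) * (real k - n * q) \<ge> (-\<beta>)\<^sup>2 * n * q + L}"
    proof (cases "real k - n * q \<ge> 0")
      case True
      hence "\<beta> * (real k - n * q) \<ge> \<beta> * (\<beta> * n * q + L / \<beta>)" using h b by (intro mult_left_mono) auto
      thus ?thesis using e by auto
    next
      case False
      hence "\<beta> * (-(real k - n * q)) \<ge> \<beta> * (\<beta> * n * q + L / \<beta>)" using h b by (intro mult_left_mono) auto
      hence "(-\<beta>) * (real k - n * q) \<ge> (-\<beta>)\<^sup>2 * n * q + L" using e by (simp add: algebra_simps)
      thus ?thesis by blast
    qed
  qed
  have "measure_pmf.prob ?M {k. \<bar>real k - n * q\<bar> > \<beta> * n * q + L / \<beta>} \<le>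
        measure_pmf.prob ?M ({k. \<beta> * (real k - n * q) \<ge> \<beta>\<^sup>2 * n * q + L} \<union> {k. (-\<beta>) * (real k - n * q) \<ge> (-\<beta>)\<^sup>2 * n * q + L})"
    by (rule measure_pmf.finite_measure_mono[OF sub]) auto
  also have "\<dots> \<le> measure_pmf.prob ?M {k. \<beta> * (real k - n * q) \<ge> \<beta>\<^sup>2 * n * q + L} + measure_pmf.prob ?M {k. (-\<beta>) * (real k - n * q) \<ge> (-\<beta>)\<^sup>2 * n * q + L}"
    by (rule measure_subadditive) auto
  also have "\<dots> \<le> exp (-L) + exp (-L)"
    using binom_chernoff[OF q, of \<beta> n L] binom_chernoff[OF q, of "-\<beta>" n L] b by (intro add_mono) auto
  finally show ?thesis by simp
qed

lemma replicate_map_pmf: "replicate_pmf n (map_pmf f p) = map_pmf (map f) (replicate_pmf n p)"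
  by (induction n) (auto simp: map_pmf_def bind_assoc_pmf bind_return_pmf)

lemma map_bernoulli: "map_pmf Q p = bernoulli_pmf (measure_pmf.prob p {x. Q x})"
proof (rule pmf_eqI)
  fix b :: bool
  have "pmf (map_pmf Q p) b = measure_pmf.prob p (Q -` {b})" by (simp add: pmf_map)
  moreover have "measure_pmf.prob p (Q -` {False}) = 1 - measure_pmf.prob p {x. Q x}"
  proof -
    have "Q -` {False} = UNIV - {x. Q x}" by auto
    thus ?thesis using measure_pmf.prob_compl[of "{x. Q x}" p] by (simp add: Compl_eq_Diff_UNIV)
  qed
  ultimately show "pmf (map_pmf Q p) b = pmf (bernoulli_pmf (measure_pmf.prob p {x. Q x})) b"
    by (cases b) (auto simp: vimage_def)
qed

lemma count_binom:
  "map_pmf (\<lambda>xs. length (filter Q xs)) (replicate_pmf n p) = binomial_pmf n (measure_pmf.prob p {x. Q x})"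
proof -
  let ?q = "measure_pmf.prob p {x. Q x}"
  have q: "?q \<in> {0..1}" by auto
  have "binomial_pmf n ?q = map_pmf (length \<circ> filter id) (replicate_pmf n (map_pmf Q p))"
    by (simp add: binomial_pmf_altdef[OF q] map_bernoulli)
  also have "\<dots> = map_pmf (\<lambda>xs. length (filter Q xs)) (replicate_pmf n p)"
    by (simp add: replicate_map_pmf pmf.map_comp o_def filter_map)
  finally show ?thesis by simp
qed

lemma count_dev:
  assumes b: "0 < \<beta>" "\<beta> \<le> 1"
  shows "measure_pmf.prob (replicate_pmf n p)
     {xs. \<bar>real (length (filter Q xs)) - n * measure_pmf.prob p {x. Q x}\<bar> >
          \<beta> * n * measure_pmf.prob p {x. Q x} + L / \<beta>} \<le> 2 * exp (-L)"
proof -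
  let ?q = "measure_pmf.prob p {x. Q x}"
  have q: "?q \<in> {0..1}" by auto
  have "measure_pmf.prob (replicate_pmf n p)
     {xs. \<bar>real (length (filter Q xs)) - n * ?q\<bar> > \<beta> * n * ?q + L / \<beta>}
     = measure_pmf.prob (map_pmf (\<lambda>xs. length (filter Q xs)) (replicate_pmf n p))
         {k. \<bar>real k - n * ?q\<bar> > \<beta> * n * ?q + L / \<beta>}" by (simp add: vimage_def)
  also have "\<dots> \<le> 2 * exp (-L)" unfolding count_binom by (rule binom_two_sided[OF q b])
  finally show ?thesis .
qed

lemma count_zero:
  assumes "measure_pmf.prob p {x. Q x} = 0"
  shows "measure_pmf.prob (replicate_pmf n p) {xs. length (filter Q xs) \<noteq> 0} = 0"
proof -
  have "measure_pmf.prob (replicate_pmf n p) {xs. length (filter Q xs) \<noteq> 0}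
     = measure_pmf.prob (map_pmf (\<lambda>xs. length (filter Q xs)) (replicate_pmf n p)) {k. k \<noteq> 0}"
    by (simp add: vimage_def)
  also have "\<dots> = 0" unfolding count_binom assms by (simp add: measure_pmf_zero_iff)
  finally show ?thesis .
qed

lemma all_miss:
  "measure_pmf.prob (replicate_pmf n p) {xs. \<forall>x\<in>set xs. \<not> Q x} = (1 - measure_pmf.prob p {x. Q x}) ^ n"
proof -
  have "{xs. \<forall>x\<in>set xs. \<not> Q x} = (\<lambda>xs. length (filter Q xs)) -` {0}"
    by (auto simp: filter_empty_conv)
  hence "measure_pmf.prob (replicate_pmf n p) {xs. \<forall>x\<in>set xs. \<not> Q x}
     = measure_pmf.prob (map_pmf (\<lambda>xs. length (filter Q xs)) (replicate_pmf n p)) {0}"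
    by simp
  also have "\<dots> = (1 - measure_pmf.prob p {x. Q x}) ^ n" unfolding count_binom
    by (simp add: measure_pmf_single)
  finally show ?thesis .
qed

lemma gen_unf:
  "map_pmf F (gen_traj P pol h0 (Suc n) s) =
     pol h0 s \<bind> (\<lambda>a. P h0 s a \<bind> (\<lambda>s'. map_pmf (\<lambda>rest. F ((s,a)#rest)) (gen_traj P pol (Suc h0) n s')))"
  by (simp add: map_pmf_def bind_assoc_pmf bind_return_pmf)

lemma det_app: "det_policy \<pi> h s = return_pmf (\<pi> h s)" by (simp add: det_policy_def)

lemma gen_supp_aux:
  assumes Psupp: "\<forall>h\<in>{1..H}. \<forall>s\<in>S. \<forall>a\<in>A. set_pmf (P h s a) \<subseteq> S"
    and piA: "\<forall>h\<in>{1..H}. \<forall>s\<in>S. \<pi>E h s \<in> A"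
    and polE: "\<And>h s. pol h s = return_pmf (\<pi>E h s)"
  shows "s \<in> S \<Longrightarrow> 1 \<le> h0 \<Longrightarrow> h0 + n \<le> H + 1 \<Longrightarrow> tr \<in> set_pmf (gen_traj P pol h0 n s) \<Longrightarrow>
    length tr = n \<and> (\<forall>i<n. fst (tr ! i) \<in> S \<and> snd (tr ! i) = \<pi>E (h0 + i) (fst (tr ! i)))"
proof (induction n arbitrary: h0 s tr)
  case 0 thus ?case by simp
next
  case (Suc n)
  have "tr \<in> set_pmf (pol h0 s \<bind> (\<lambda>a. P h0 s a \<bind> (\<lambda>s'. gen_traj P pol (Suc h0) n s' \<bind> (\<lambda>rest. return_pmf ((s,a)#rest)))))"
    using Suc.prems(4) by simp
  hence "tr \<in> set_pmf (P h0 s (\<pi>E h0 s) \<bind> (\<lambda>s'. gen_traj P pol (Suc h0) n s' \<bind> (\<lambda>rest. return_pmf ((s,\<pi>E h0 s)#rest))))"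
    by (simp only: polE[of h0 s] bind_return_pmf)
  then obtain s' rest where s': "s' \<in> set_pmf (P h0 s (\<pi>E h0 s))"
    and rest: "rest \<in> set_pmf (gen_traj P pol (Suc h0) n s')"
    and tr: "tr = (s, \<pi>E h0 s) # rest"
    by auto
  have h0: "h0 \<in> {1..H}" using Suc.prems by auto
  have "s' \<in> S" using Psupp piA h0 Suc.prems(1) s' by blast
  from Suc.IH[OF this _ _ rest] Suc.prems have IH:
    "length rest = n \<and> (\<forall>i<n. fst (rest ! i) \<in> S \<and> snd (rest ! i) = \<pi>E (Suc h0 + i) (fst (rest ! i)))"
    by auto
  show ?case
  proof (rule conjI)
    show "length tr = Suc n" using IH tr by simp
    show "\<forall>i<Suc n. fst (tr ! i) \<in> S \<and> snd (tr ! i) = \<pi>E (h0 + i) (fst (tr ! i))"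
    proof (intro allI impI)
      fix i assume "i < Suc n"
      thus "fst (tr ! i) \<in> S \<and> snd (tr ! i) = \<pi>E (h0 + i) (fst (tr ! i))"
        using IH tr Suc.prems(1) by (cases i) auto
    qed
  qed
qed

lemmas gen_supp = gen_supp_aux[where pol="det_policy \<pi>E" for \<pi>E, OF _ _ det_app]

lemma traj_supp:
  assumes Psupp: "\<forall>h\<in>{1..H}. \<forall>s\<in>S. \<forall>a\<in>A. set_pmf (P h s a) \<subseteq> S"
    and piA: "\<forall>h\<in>{1..H}. \<forall>s\<in>S. \<pi>E h s \<in> A" and rho: "set_pmf \<rho> \<subseteq> S"
    and tr: "tr \<in> set_pmf (traj_dist \<rho> P (det_policy \<pi>E) H)"
  shows "length tr = H \<and> (\<forall>i<H. fst (tr ! i) \<in> S \<and> snd (tr ! i) = \<pi>E (Suc i) (fst (tr ! i)))"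
proof -
  from tr obtain s where s: "s \<in> set_pmf \<rho>" and tr': "tr \<in> set_pmf (gen_traj P (det_policy \<pi>E) 1 H s)"
    by (auto simp: traj_dist_def)
  show ?thesis using gen_supp[OF Psupp piA _ _ _ tr'] s rho by auto
qed

definition trunc :: "(nat \<Rightarrow> nat \<Rightarrow> bool) \<Rightarrow> nat \<Rightarrow> nat \<Rightarrow> traj \<Rightarrow> traj option" where
  "trunc G h0 k tr = (if \<forall>i<k. G (h0 + i) (fst (tr ! i)) then Some (take k tr) else None)"

lemma trunc_Suc:
  "trunc G h0 (Suc k) ((s,a)#rest) = (if G h0 s then map_option (Cons (s,a)) (trunc G (Suc h0) k rest) else None)"
  by (auto simp: trunc_def less_Suc_eq_0_disj)

lemma gen_start: "tr \<in> set_pmf (gen_traj P pol h (Suc n) s) \<Longrightarrow> \<exists>a rest. tr = (s,a)#rest"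
  by auto

lemma trunc_eq:
  assumes Psupp: "\<forall>h\<in>{1..H}. \<forall>s\<in>S. \<forall>a\<in>A. set_pmf (P h s a) \<subseteq> S"
    and agree: "\<And>l s. l \<in> {1..H} \<Longrightarrow> s \<in> S \<Longrightarrow> G l s \<Longrightarrow> pol1 l s = pol2 l s"
    and acts: "\<And>l s. l \<in> {1..H} \<Longrightarrow> s \<in> S \<Longrightarrow> G l s \<Longrightarrow> set_pmf (pol1 l s) \<subseteq> A"
  shows "s \<in> S \<Longrightarrow> 1 \<le> h0 \<Longrightarrow> h0 + n \<le> H + 1 \<Longrightarrow>
    map_pmf (trunc G h0 k) (gen_traj P pol1 h0 n s) = map_pmf (trunc G h0 k) (gen_traj P pol2 h0 n s)"
proof (induction n arbitrary: h0 s k)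
  case 0 thus ?case by simp
next
  case (Suc n)
  show ?case
  proof (cases k)
    case 0
    hence "trunc G h0 k = (\<lambda>_. Some [])" by (auto simp: trunc_def fun_eq_iff)
    thus ?thesis by simp
  next
    case (Suc k')
    show ?thesis
    proof (cases "G h0 s")
      case False
      have "map_pmf (trunc G h0 k) (gen_traj P pol h0 (Suc n) s) = return_pmf None" for pol
      proof -
        have "map_pmf (trunc G h0 k) (gen_traj P pol h0 (Suc n) s) = map_pmf (\<lambda>_. None) (gen_traj P pol h0 (Suc n) s)"
          by (intro map_pmf_cong refl) (auto simp: Suc trunc_Suc False dest!: gen_start)
        thus ?thesis by simp
      qed
      thus ?thesis by simp
    next
      case True
      have h0: "h0 \<in> {1..H}" using Suc.prems by auto
      have eq: "map_pmf (trunc G h0 k) (gen_traj P pol h0 (Suc n) s) =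
         pol h0 s \<bind> (\<lambda>a. P h0 s a \<bind> (\<lambda>s'. map_pmf (map_option (Cons (s,a))) (map_pmf (trunc G (Suc h0) k') (gen_traj P pol (Suc h0) n s'))))" for pol
        unfolding gen_unf by (simp add: Suc trunc_Suc True pmf.map_comp o_def)
      have mid: "pol1 h0 s \<bind> (\<lambda>a. P h0 s a \<bind> (\<lambda>s'. map_pmf (map_option (Cons (s,a))) (map_pmf (trunc G (Suc h0) k') (gen_traj P pol1 (Suc h0) n s'))))
          = pol1 h0 s \<bind> (\<lambda>a. P h0 s a \<bind> (\<lambda>s'. map_pmf (map_option (Cons (s,a))) (map_pmf (trunc G (Suc h0) k') (gen_traj P pol2 (Suc h0) n s'))))"
      proof (intro bind_pmf_cong refl)
        fix a s' assume a: "a \<in> set_pmf (pol1 h0 s)" and s': "s' \<in> set_pmf (P h0 s a)"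
        have "a \<in> A" using acts[OF h0 Suc.prems(1) True] a by blast
        hence "s' \<in> S" using Psupp h0 Suc.prems(1) s' by blast
        thus "map_pmf (map_option (Cons (s,a))) (map_pmf (trunc G (Suc h0) k') (gen_traj P pol1 (Suc h0) n s'))
           = map_pmf (map_option (Cons (s,a))) (map_pmf (trunc G (Suc h0) k') (gen_traj P pol2 (Suc h0) n s'))"
          using Suc.IH[of s' "Suc h0" k'] Suc.prems by simp
      qed
      show ?thesis unfolding eq[of pol1] eq[of pol2] mid using agree[OF h0 Suc.prems(1) True] by simp
    qed
  qed
qed

lemma vs_all:
  assumes "valid_setting S A X \<rho> P r \<pi>E \<phi> H"
  shows "finite S \<and> finite A \<and> A \<noteq> {} \<and> finite X \<and> X \<noteq> {} \<and> set_pmf \<rho> \<subseteq> S \<and>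
    (\<forall>h\<in>{1..H}. \<forall>s\<in>S. \<forall>a\<in>A. set_pmf (P h s a) \<subseteq> S) \<and>
    (\<forall>h\<in>{1..H}. \<forall>s\<in>S. \<pi>E h s \<in> A) \<and>
    (\<forall>h\<in>{1..Suc H}. \<forall>s\<in>S. \<phi> h s \<in> X) \<and>
    (\<forall>h\<in>{1..H}. \<forall>s1\<in>S. \<forall>s2\<in>S. \<phi> h s1 = \<phi> h s2 \<longrightarrow> \<pi>E h s1 = \<pi>E h s2)"
  using assms unfolding valid_setting_def by (elim conjE) (intro conjI; blast)

lemma vs_facts:
  assumes "valid_setting S A X \<rho> P r \<pi>E \<phi> H"
  shows "finite S" "finite A" "A \<noteq> {}" "finite X" "X \<noteq> {}" "set_pmf \<rho> \<subseteq> S"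
    "\<forall>h\<in>{1..H}. \<forall>s\<in>S. \<forall>a\<in>A. set_pmf (P h s a) \<subseteq> S"
    "\<forall>h\<in>{1..H}. \<forall>s\<in>S. \<pi>E h s \<in> A"
    "\<forall>h\<in>{1..Suc H}. \<forall>s\<in>S. \<phi> h s \<in> X"
  using vs_all[OF assms] by blast+

lemma vs_irr:
  assumes "valid_setting S A X \<rho> P r \<pi>E \<phi> H" "h \<in> {1..H}" "s1 \<in> S" "s2 \<in> S" "\<phi> h s1 = \<phi> h s2"
  shows "\<pi>E h s1 = \<pi>E h s2"
  using vs_all[OF assms(1)] assms(2-5) by blast

lemma traj_suppV:
  assumes V: "valid_setting S A X \<rho> P r \<pi>E \<phi> H"
    and tr: "tr \<in> set_pmf (traj_dist \<rho> P (det_policy \<pi>E) H)"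
  shows "length tr = H \<and> (\<forall>i<H. fst (tr ! i) \<in> S \<and> snd (tr ! i) = \<pi>E (Suc i) (fst (tr ! i)))"
  by (rule traj_supp[OF vs_facts(7,8,6)[OF V] tr])

definition Gs :: "(nat \<Rightarrow> nat \<Rightarrow> nat) \<Rightarrow> traj list \<Rightarrow> nat \<Rightarrow> nat \<Rightarrow> bool" where
  "Gs \<phi> D1 l s = (\<phi> l s \<in> {\<phi> l (fst (tr' ! (l - 1))) | tr'. tr' \<in> set D1})"

lemma pmf_of_multiset_const:
  assumes "xs \<noteq> []" "\<forall>y\<in>set xs. y = c"
  shows "pmf_of_multiset (mset xs) = return_pmf c"
proof -
  have xs: "xs = replicate (length xs) c" using assms(2) replicate_length_same[of xs c] by simp
  define n where "n = length xs"
  have n: "n > 0" using assms(1) by (simp add: n_def)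
  have M: "mset xs = replicate_mset n c" using xs unfolding n_def by (metis mset_replicate)
  have ne: "replicate_mset n c \<noteq> {#}" using n by (cases n) auto
  show ?thesis unfolding M
  proof (rule pmf_eqI)
    fix x
    show "pmf (pmf_of_multiset (replicate_mset n c)) x = pmf (return_pmf c) x"
      using ne n by (auto simp: indicator_def)
  qed
qed

lemma bc_agree:
  assumes V: "valid_setting S A X \<rho> P r \<pi>E \<phi> H"
    and D1: "D1 \<in> set_pmf (replicate_pmf k (traj_dist \<rho> P (det_policy \<pi>E) H))"
    and l: "l \<in> {1..H}" and s: "s \<in> S" and G: "Gs \<phi> D1 l s"
  shows "lift_policy (abs_bc A \<phi> D1) \<phi> l s = det_policy \<pi>E l s"
proof -
  from G obtain tr0 where tr0: "tr0 \<in> set D1" and eq0: "\<phi> l (fst (tr0 ! (l - 1))) = \<phi> l s"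
    unfolding Gs_def by auto
  let ?F = "filter (\<lambda>tr. \<phi> l (fst (tr ! (l - 1))) = \<phi> l s) D1"
  have ne: "?F \<noteq> []" using tr0 eq0 by (auto simp: filter_empty_conv)
  hence cnt: "cnt_x \<phi> D1 l (\<phi> l s) > 0" by (simp add: cnt_x_def)
  have supp: "\<And>tr. tr \<in> set D1 \<Longrightarrow> length tr = H \<and> (\<forall>i<H. fst (tr ! i) \<in> S \<and> snd (tr ! i) = \<pi>E (Suc i) (fst (tr ! i)))"
  proof -
    fix tr assume "tr \<in> set D1"
    hence "tr \<in> set_pmf (traj_dist \<rho> P (det_policy \<pi>E) H)" using D1 by (auto simp: set_replicate_pmf)
    thus "length tr = H \<and> (\<forall>i<H. fst (tr ! i) \<in> S \<and> snd (tr ! i) = \<pi>E (Suc i) (fst (tr ! i)))"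
      by (rule traj_suppV[OF V])
  qed
  have all: "\<forall>y\<in>set (map (\<lambda>tr. snd (tr ! (l - 1))) ?F). y = \<pi>E l s"
  proof
    fix y assume "y \<in> set (map (\<lambda>tr. snd (tr ! (l - 1))) ?F)"
    then obtain tr where tr: "tr \<in> set D1" and e: "\<phi> l (fst (tr ! (l - 1))) = \<phi> l s" and y: "y = snd (tr ! (l - 1))"
      by auto
    have lH: "l - 1 < H" and sl: "Suc (l - 1) = l" using l by auto
    from supp[OF tr] lH sl have S1: "fst (tr ! (l - 1)) \<in> S" and y2: "y = \<pi>E l (fst (tr ! (l - 1)))"
      using y by auto
    show "y = \<pi>E l s" using vs_irr[OF V l S1 s e] y2 by simp
  qed
  have "lift_policy (abs_bc A \<phi> D1) \<phi> l s = pmf_of_multiset (mset (map (\<lambda>tr. snd (tr ! (l - 1))) ?F))"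
    using cnt by (simp add: lift_policy_def abs_bc_def)
  also have "\<dots> = return_pmf (\<pi>E l s)" using ne all by (intro pmf_of_multiset_const) auto
  finally show ?thesis by (simp add: det_app)
qed

lemma traj_trunc_eq:
  assumes V: "valid_setting S A X \<rho> P r \<pi>E \<phi> H"
    and D1: "D1 \<in> set_pmf (replicate_pmf k (traj_dist \<rho> P (det_policy \<pi>E) H))"
  shows "map_pmf (trunc (Gs \<phi> D1) 1 j) (traj_dist \<rho> P (lift_policy (abs_bc A \<phi> D1) \<phi>) H)
       = map_pmf (trunc (Gs \<phi> D1) 1 j) (traj_dist \<rho> P (det_policy \<pi>E) H)"
proof -
  have Psupp: "\<forall>h\<in>{1..H}. \<forall>s\<in>S. \<forall>a\<in>A. set_pmf (P h s a) \<subseteq> S" and rho: "set_pmf \<rho> \<subseteq> S"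
    and piA: "\<forall>h\<in>{1..H}. \<forall>s\<in>S. \<pi>E h s \<in> A"
    using vs_facts[OF V] by auto
  have "map_pmf (trunc (Gs \<phi> D1) 1 j) (gen_traj P (det_policy \<pi>E) 1 H s)
      = map_pmf (trunc (Gs \<phi> D1) 1 j) (gen_traj P (lift_policy (abs_bc A \<phi> D1) \<phi>) 1 H s)" if s: "s \<in> S" for s
  proof (rule trunc_eq[OF Psupp _ _ s])
    show "det_policy \<pi>E l s = lift_policy (abs_bc A \<phi> D1) \<phi> l s" if "l \<in> {1..H}" "s \<in> S" "Gs \<phi> D1 l s" for l s
      using bc_agree[OF V D1 that] by simp
    show "set_pmf (det_policy \<pi>E l s) \<subseteq> A" if "l \<in> {1..H}" "s \<in> S" "Gs \<phi> D1 l s" for l s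
      using piA that by (auto simp: det_app)
  qed simp_all
  note eqs = this
  show ?thesis unfolding traj_dist_def map_bind_pmf
  proof (rule bind_pmf_cong[OF refl])
    fix s assume "s \<in> set_pmf \<rho>"
    hence "s \<in> S" using rho by blast
    from eqs[OF this] show "map_pmf (trunc (Gs \<phi> D1) 1 j) (gen_traj P (lift_policy (abs_bc A \<phi> D1) \<phi>) 1 H s)
        = map_pmf (trunc (Gs \<phi> D1) 1 j) (gen_traj P (det_policy \<pi>E) 1 H s)" by (rule sym)
  qed
qed

lemma in_Tr_trunc:
  "in_Tr \<phi> D1 h tr = (\<forall>i<h. Gs \<phi> D1 (1 + i) (fst (tr ! i)))"
proof -
  have "(\<forall>l\<in>{1..h}. Q l) = (\<forall>i<h. Q (1 + i))" for Q :: "nat \<Rightarrow> bool"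
  proof
    assume L: "\<forall>l\<in>{1..h}. Q l"
    show "\<forall>i<h. Q (1 + i)" using L by auto
  next
    assume R: "\<forall>i<h. Q (1 + i)"
    show "\<forall>l\<in>{1..h}. Q l"
    proof
      fix l assume l: "l \<in> {1..h}"
      hence "l - 1 < h" "1 + (l - 1) = l" by auto
      thus "Q l" using R by metis
    qed
  qed
  thus ?thesis unfolding in_Tr_def Gs_def by simp
qed

lemma event_trunc:
  assumes h: "1 \<le> h"
  shows "{tr. \<phi> h (fst (tr ! (h - 1))) = x \<and> snd (tr ! (h - 1)) = a \<and> in_Tr \<phi> D1 h tr}
    = trunc (Gs \<phi> D1) 1 h -` {ov. \<exists>p. ov = Some p \<and> \<phi> h (fst (p ! (h - 1))) = x \<and> snd (p ! (h - 1)) = a}"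
  using h by (auto simp: trunc_def in_Tr_trunc nth_take)

lemma q1_eq:
  assumes V: "valid_setting S A X \<rho> P r \<pi>E \<phi> H"
    and D1: "D1 \<in> set_pmf (replicate_pmf k (traj_dist \<rho> P (det_policy \<pi>E) H))"
    and h: "1 \<le> h"
  shows "measure_pmf.prob (traj_dist \<rho> P (lift_policy (abs_bc A \<phi> D1) \<phi>) H)
           {tr. \<phi> h (fst (tr ! (h - 1))) = x \<and> snd (tr ! (h - 1)) = a \<and> in_Tr \<phi> D1 h tr}
       = measure_pmf.prob (traj_dist \<rho> P (det_policy \<pi>E) H)
           {tr. \<phi> h (fst (tr ! (h - 1))) = x \<and> snd (tr ! (h - 1)) = a \<and> in_Tr \<phi> D1 h tr}"
  unfolding event_trunc[OF h]
  by (simp only: measure_map_pmf[symmetric] traj_trunc_eq[OF V D1])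

lemma sum_prob:
  assumes "finite B"
  shows "(\<Sum>b\<in>B. measure_pmf.prob M {t. f t = b \<and> F t}) = measure_pmf.prob M {t. f t \<in> B \<and> F t}"
  using assms
proof (induction B rule: finite_induct)
  case empty thus ?case by simp
next
  case (insert b B)
  have "{t. f t \<in> insert b B \<and> F t} = {t. f t = b \<and> F t} \<union> {t. f t \<in> B \<and> F t}" by auto
  moreover have "{t. f t = b \<and> F t} \<inter> {t. f t \<in> B \<and> F t} = {}" using insert by auto
  ultimately have "measure_pmf.prob M {t. f t \<in> insert b B \<and> F t}
     = measure_pmf.prob M {t. f t = b \<and> F t} + measure_pmf.prob M {t. f t \<in> B \<and> F t}"
    by (simp add: measure_pmf.finite_measure_Union)
  thus ?case using insert by simp
qed

lemma prob_cong_supp: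
  assumes "\<And>t. t \<in> set_pmf M \<Longrightarrow> t \<in> U \<longleftrightarrow> t \<in> W"
  shows "measure_pmf.prob M U = measure_pmf.prob M W"
proof -
  have "U \<inter> set_pmf M = W \<inter> set_pmf M" using assms by auto
  thus ?thesis by (metis measure_Int_set_pmf)
qed

lemma prob_mono_supp:
  assumes "\<And>t. t \<in> set_pmf M \<Longrightarrow> t \<in> U \<Longrightarrow> t \<in> W"
  shows "measure_pmf.prob M U \<le> measure_pmf.prob M W"
proof -
  have "measure_pmf.prob M U = measure_pmf.prob M (U \<inter> set_pmf M)" by (simp add: measure_Int_set_pmf)
  also have "\<dots> \<le> measure_pmf.prob M W" using assms by (intro measure_pmf.finite_measure_mono) auto
  finally show ?thesis .
qed

lemma bind_prob_le:
  assumes "\<And>x. x \<in> set_pmf M \<Longrightarrow> measure_pmf.prob (f x) A \<le> c" "0 \<le> c"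
  shows "measure_pmf.prob (bind_pmf M f) A \<le> c"
proof -
  have "emeasure (measure_pmf (bind_pmf M f)) A = (\<integral>\<^sup>+x. emeasure (measure_pmf (f x)) A \<partial>measure_pmf M)"
    by simp
  also have "\<dots> \<le> (\<integral>\<^sup>+x. ennreal c \<partial>measure_pmf M)"
    using assms by (intro nn_integral_mono_AE) (auto simp: AE_measure_pmf_iff measure_pmf.emeasure_eq_measure)
  also have "\<dots> = ennreal c" by (simp add: measure_pmf.emeasure_space_1)
  finally show ?thesis using assms(2) by (simp add: measure_pmf.emeasure_eq_measure)
qed

lemma sum_dev:
  fixes q r d :: "nat \<Rightarrow> nat \<Rightarrow> real"
  assumes fin: "finite X" "finite A"
    and card: "\<And>x. x \<in> X \<Longrightarrow> card {a\<in>A. r x a \<noteq> 0} \<le> 1"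
    and qr: "\<And>x a. x \<in> X \<Longrightarrow> a \<in> A \<Longrightarrow> 0 \<le> q x a \<and> q x a \<le> r x a"
    and dev: "\<And>x a. x \<in> X \<Longrightarrow> a \<in> A \<Longrightarrow> \<bar>d x a\<bar> \<le> (if q x a = 0 then 0 else \<beta> * q x a + c)"
    and c: "0 \<le> c" and b: "0 \<le> \<beta>"
  shows "(\<Sum>x\<in>X. \<Sum>a\<in>A. \<bar>d x a\<bar>) \<le> \<beta> * (\<Sum>x\<in>X. \<Sum>a\<in>A. q x a) + real (card X) * c"
proof -
  have per: "(\<Sum>a\<in>A. \<bar>d x a\<bar>) \<le> \<beta> * (\<Sum>a\<in>A. q x a) + c" if x: "x \<in> X" for x
  proof -
    have "(\<Sum>a\<in>A. \<bar>d x a\<bar>) \<le> (\<Sum>a\<in>A. \<beta> * q x a + (if r x a = 0 then 0 else c))"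
    proof (rule sum_mono)
      fix a assume a: "a \<in> A"
      from qr[OF x a] have "r x a = 0 \<Longrightarrow> q x a = 0" by auto
      thus "\<bar>d x a\<bar> \<le> \<beta> * q x a + (if r x a = 0 then 0 else c)"
        using dev[OF x a] qr[OF x a] b c by (auto split: if_splits)
    qed
    also have "\<dots> = \<beta> * (\<Sum>a\<in>A. q x a) + (\<Sum>a\<in>A. (if r x a = 0 then 0 else c))"
      by (simp add: sum.distrib sum_distrib_left)
    also have "(\<Sum>a\<in>A. (if r x a = 0 then 0 else c)) = real (card {a\<in>A. r x a \<noteq> 0}) * c"
    proof -
      have "(\<Sum>a\<in>A. (if r x a = 0 then 0 else c)) = (\<Sum>a\<in>{a\<in>A. r x a \<noteq> 0}. c)"
        using fin(2) by (simp add: sum.If_cases Int_def)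
      thus ?thesis by simp
    qed
    also have "\<dots> \<le> c" using card[OF x] c
      by (metis (no_types, lifting) mult_left_le_one_le of_nat_0_le_iff of_nat_le_1_iff mult.commute mult_le_cancel_right1)
    finally show ?thesis by simp
  qed
  have "(\<Sum>x\<in>X. \<Sum>a\<in>A. \<bar>d x a\<bar>) \<le> (\<Sum>x\<in>X. \<beta> * (\<Sum>a\<in>A. q x a) + c)"
    by (rule sum_mono) (rule per)
  also have "\<dots> = \<beta> * (\<Sum>x\<in>X. \<Sum>a\<in>A. q x a) + real (card X) * c"
    by (simp add: sum.distrib sum_distrib_left)
  finally show ?thesis .
qed

definition okf :: "nat \<Rightarrow> real \<Rightarrow> nat \<Rightarrow> real \<Rightarrow> real \<Rightarrow> bool" where
  "okf n q c \<beta> L = (if q = 0 then c = 0 else \<bar>real c - n * q\<bar> \<le> \<beta> * n * q + L / \<beta>)"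

lemma atom_fail:
  assumes "0 < \<beta>" "\<beta> \<le> 1"
  shows "measure_pmf.prob (replicate_pmf n p) {xs. \<not> okf n (measure_pmf.prob p {x. Q x}) (length (filter Q xs)) \<beta> L}
     \<le> (if measure_pmf.prob p {x. Q x} = 0 then 0 else 2 * exp (-L))"
proof (cases "measure_pmf.prob p {x. Q x} = 0")
  case True
  thus ?thesis using count_zero[OF True, of n] by (simp add: okf_def)
next
  case False
  have "{xs. \<not> okf n (measure_pmf.prob p {x. Q x}) (length (filter Q xs)) \<beta> L} =
    {xs. \<bar>real (length (filter Q xs)) - n * measure_pmf.prob p {x. Q x}\<bar> >
          \<beta> * n * measure_pmf.prob p {x. Q x} + L / \<beta>}"
    using False by (auto simp: okf_def)
  thus ?thesis using count_dev[OF assms, of n p Q L] False by simp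
qed

lemma okf_dev:
  assumes "okf n q c \<beta> L" "n > 0" "\<beta> > 0"
  shows "\<bar>real c / n - q\<bar> \<le> (if q = 0 then 0 else \<beta> * q + L / (\<beta> * n))"
proof (cases "q = 0")
  case True thus ?thesis using assms by (simp add: okf_def)
next
  case False
  hence h: "\<bar>real c - n * q\<bar> \<le> \<beta> * n * q + L / \<beta>" using assms by (simp add: okf_def)
  have "\<bar>real c / n - q\<bar> = \<bar>real c - n * q\<bar> / n" using assms(2)
    by (simp add: field_simps abs_divide)
  also have "\<dots> \<le> (\<beta> * n * q + L / \<beta>) / n" using h assms(2) by (intro divide_right_mono) auto
  also have "\<dots> = \<beta> * q + L / (\<beta> * n)" using assms(2,3) by (simp add: field_simps)
  finally show ?thesis using False by simp
qed

lemma sum_if_card: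
  fixes g :: "'a \<Rightarrow> real" and c :: real
  assumes "finite A" "card {a\<in>A. g a \<noteq> 0} \<le> 1" "0 \<le> c"
  shows "(\<Sum>a\<in>A. (if g a = 0 then 0 else c)) \<le> c"
proof -
  have "(\<Sum>a\<in>A. (if g a = 0 then 0 else c)) = real (card {a\<in>A. g a \<noteq> 0}) * c"
    using assms(1) by (simp add: sum.If_cases Int_def)
  also have "\<dots> \<le> c" using assms(2,3)
    by (metis (no_types, lifting) mult_left_le_one_le of_nat_0_le_iff of_nat_le_1_iff mult.commute mult_le_cancel_right1)
  finally show ?thesis .
qed

lemma union_fail:
  assumes fin: "finite X" "finite A" and b: "0 < \<beta>" "\<beta> \<le> 1"
    and card: "\<And>h x. h \<in> {1..H} \<Longrightarrow> x \<in> X \<Longrightarrow> card {a\<in>A. measure_pmf.prob p {tr. Q h x a tr} \<noteq> 0} \<le> 1"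
  shows "measure_pmf.prob (replicate_pmf n p)
     {xs. \<exists>h\<in>{1..H}. \<exists>x\<in>X. \<exists>a\<in>A. \<not> okf n (measure_pmf.prob p {tr. Q h x a tr}) (length (filter (Q h x a) xs)) \<beta> L}
     \<le> 2 * real H * real (card X) * exp (-L)"
proof -
  let ?F = "\<lambda>(h,x,a). {xs. \<not> okf n (measure_pmf.prob p {tr. Q h x a tr}) (length (filter (Q h x a) xs)) \<beta> L}"
  let ?I = "{1..H} \<times> X \<times> A"
  have eq: "{xs. \<exists>h\<in>{1..H}. \<exists>x\<in>X. \<exists>a\<in>A. \<not> okf n (measure_pmf.prob p {tr. Q h x a tr}) (length (filter (Q h x a) xs)) \<beta> L}
     = (\<Union>i\<in>?I. ?F i)" by auto
  have "measure_pmf.prob (replicate_pmf n p) (\<Union>i\<in>?I. ?F i) \<le> (\<Sum>i\<in>?I. measure_pmf.prob (replicate_pmf n p) (?F i))"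
    using fin by (intro measure_pmf.finite_measure_subadditive_finite) auto
  also have "\<dots> = (\<Sum>h\<in>{1..H}. \<Sum>x\<in>X. \<Sum>a\<in>A. measure_pmf.prob (replicate_pmf n p) (?F (h,x,a)))"
    by (simp add: sum.cartesian_product prod.case_distrib)
  also have "\<dots> \<le> (\<Sum>h\<in>{1..H}. \<Sum>x\<in>X. 2 * exp (-L))"
  proof (intro sum_mono)
    fix h x assume h: "h \<in> {1..H}" and x: "x \<in> X"
    have "(\<Sum>a\<in>A. measure_pmf.prob (replicate_pmf n p) (?F (h,x,a)))
        \<le> (\<Sum>a\<in>A. (if measure_pmf.prob p {tr. Q h x a tr} = 0 then 0 else 2 * exp (-L)))"
      by (intro sum_mono) (simp add: atom_fail[OF b])
    also have "\<dots> \<le> 2 * exp (-L)" using sum_if_card[of A "\<lambda>a. measure_pmf.prob p {tr. Q h x a tr}" "2 * exp (-L)"] fin(2) card[OF h x] by simp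
    finally show "(\<Sum>a\<in>A. measure_pmf.prob (replicate_pmf n p) (?F (h,x,a))) \<le> 2 * exp (-L)" .
  qed
  also have "\<dots> = 2 * real H * real (card X) * exp (-L)" by simp
  finally show ?thesis unfolding eq .
qed

abbreviation EDist where "EDist \<rho> P \<pi>E H \<equiv> traj_dist \<rho> P (det_policy \<pi>E) H"

lemma occ_split:
  assumes V: "valid_setting S A X \<rho> P r \<pi>E \<phi> H" and h: "h \<in> {1..H}"
  shows "abs_occ S \<rho> P \<pi>E \<phi> H h x a =
     measure_pmf.prob (EDist \<rho> P \<pi>E H) {tr. \<phi> h (fst (tr ! (h - 1))) = x \<and> snd (tr ! (h - 1)) = a \<and> in_Tr \<phi> D1 h tr}
   + measure_pmf.prob (EDist \<rho> P \<pi>E H) {tr. \<phi> h (fst (tr ! (h - 1))) = x \<and> snd (tr ! (h - 1)) = a \<and> \<not> in_Tr \<phi> D1 h tr}"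
proof -
  let ?M = "EDist \<rho> P \<pi>E H"
  let ?B = "{s\<in>S. \<phi> h s = x}"
  have finS: "finite S" using vs_facts[OF V] by simp
  have "abs_occ S \<rho> P \<pi>E \<phi> H h x a = (\<Sum>s\<in>?B. measure_pmf.prob ?M {tr. fst (tr ! (h - 1)) = s \<and> snd (tr ! (h - 1)) = a})"
    unfolding abs_occ_def occ_def by (intro sum.cong refl arg_cong[where f="measure_pmf.prob ?M"]) (auto simp: prod_eq_iff)
  also have "\<dots> = measure_pmf.prob ?M {tr. fst (tr ! (h - 1)) \<in> ?B \<and> snd (tr ! (h - 1)) = a}"
    using finS by (intro sum_prob) auto
  also have "\<dots> = measure_pmf.prob ?M {tr. \<phi> h (fst (tr ! (h - 1))) = x \<and> snd (tr ! (h - 1)) = a}"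
  proof (rule prob_cong_supp)
    fix tr assume "tr \<in> set_pmf ?M"
    from traj_suppV[OF V this] h have "fst (tr ! (h - 1)) \<in> S" by auto
    thus "tr \<in> {tr. fst (tr ! (h - 1)) \<in> ?B \<and> snd (tr ! (h - 1)) = a} \<longleftrightarrow>
          tr \<in> {tr. \<phi> h (fst (tr ! (h - 1))) = x \<and> snd (tr ! (h - 1)) = a}" by auto
  qed
  also have "\<dots> = measure_pmf.prob ?M ({tr. \<phi> h (fst (tr ! (h - 1))) = x \<and> snd (tr ! (h - 1)) = a \<and> in_Tr \<phi> D1 h tr}
      \<union> {tr. \<phi> h (fst (tr ! (h - 1))) = x \<and> snd (tr ! (h - 1)) = a \<and> \<not> in_Tr \<phi> D1 h tr})"
    by (intro arg_cong[where f="measure_pmf.prob ?M"]) auto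
  also have "\<dots> = measure_pmf.prob ?M {tr. \<phi> h (fst (tr ! (h - 1))) = x \<and> snd (tr ! (h - 1)) = a \<and> in_Tr \<phi> D1 h tr}
   + measure_pmf.prob ?M {tr. \<phi> h (fst (tr ! (h - 1))) = x \<and> snd (tr ! (h - 1)) = a \<and> \<not> in_Tr \<phi> D1 h tr}"
    by (intro measure_pmf.finite_measure_Union) auto
  finally show ?thesis .
qed

lemma det_card:
  assumes V: "valid_setting S A X \<rho> P r \<pi>E \<phi> H" and h: "h \<in> {1..H}"
  shows "card {a\<in>A. measure_pmf.prob (EDist \<rho> P \<pi>E H) {tr. \<phi> h (fst (tr ! (h - 1))) = x \<and> snd (tr ! (h - 1)) = a} \<noteq> 0} \<le> 1"
proof -
  let ?M = "EDist \<rho> P \<pi>E H"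
  let ?C = "{a\<in>A. measure_pmf.prob ?M {tr. \<phi> h (fst (tr ! (h - 1))) = x \<and> snd (tr ! (h - 1)) = a} \<noteq> 0}"
  have finA: "finite A" using vs_facts[OF V] by simp
  have wit: "\<exists>s\<in>S. \<phi> h s = x \<and> a = \<pi>E h s" if "a \<in> ?C" for a
  proof -
    from that have "set_pmf ?M \<inter> {tr. \<phi> h (fst (tr ! (h - 1))) = x \<and> snd (tr ! (h - 1)) = a} \<noteq> {}"
      by (simp add: measure_pmf_zero_iff)
    then obtain tr where tr: "tr \<in> set_pmf ?M" and e: "\<phi> h (fst (tr ! (h - 1))) = x" "snd (tr ! (h - 1)) = a" by blast
    have hh: "h - 1 < H" "Suc (h - 1) = h" using h by auto
    from traj_suppV[OF V tr] hh have S1: "fst (tr ! (h - 1)) \<in> S" and A1: "snd (tr ! (h - 1)) = \<pi>E h (fst (tr ! (h - 1)))"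
      by auto
    show ?thesis using S1 A1 e by auto
  qed
  have "\<forall>a1\<in>?C. \<forall>a2\<in>?C. a1 = a2"
  proof (intro ballI)
    fix a1 a2 assume "a1 \<in> ?C" "a2 \<in> ?C"
    from wit[OF this(1)] wit[OF this(2)] obtain s1 s2 where
      w: "s1 \<in> S" "\<phi> h s1 = x" "a1 = \<pi>E h s1" "s2 \<in> S" "\<phi> h s2 = x" "a2 = \<pi>E h s2" by blast
    have "\<phi> h s1 = \<phi> h s2" using w by simp
    from vs_irr[OF V h w(1) w(4) this] show "a1 = a2" using w by simp
  qed
  moreover have fC: "finite ?C" using finA by simp
  ultimately have "card ?C \<le> Suc 0" using card_le_Suc0_iff_eq[OF fC] by blast
  thus ?thesis by simp
qed

definition good1 :: "nat set \<Rightarrow> nat pmf \<Rightarrow> (nat \<Rightarrow> nat \<Rightarrow> nat \<Rightarrow> nat pmf) \<Rightarrow> (nat \<Rightarrow> nat \<Rightarrow> nat)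
   \<Rightarrow> (nat \<Rightarrow> nat \<Rightarrow> nat) \<Rightarrow> nat \<Rightarrow> real \<Rightarrow> traj list \<Rightarrow> bool" where
  "good1 X \<rho> P \<pi>E \<phi> H \<tau> D1 = (\<forall>l\<in>{1..H}. \<forall>x\<in>X.
     measure_pmf.prob (EDist \<rho> P \<pi>E H) {tr. \<phi> l (fst (tr ! (l - 1))) = x} \<ge> \<tau> \<longrightarrow>
     (\<exists>tr'\<in>set D1. \<phi> l (fst (tr' ! (l - 1))) = x))"

lemma notTr:
  assumes V: "valid_setting S A X \<rho> P r \<pi>E \<phi> H" and h: "h \<le> H" and tau: "0 \<le> \<tau>"
    and g: "good1 X \<rho> P \<pi>E \<phi> H \<tau> D1"
  shows "measure_pmf.prob (EDist \<rho> P \<pi>E H) {tr. \<not> in_Tr \<phi> D1 h tr} \<le> real H * real (card X) * \<tau>"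
proof -
  let ?M = "EDist \<rho> P \<pi>E H"
  let ?Phi = "\<lambda>l. {\<phi> l (fst (tr' ! (l - 1))) | tr'. tr' \<in> set D1}"
  have finX: "finite X" using vs_facts[OF V] by simp
  have phiX: "\<forall>h\<in>{1..Suc H}. \<forall>s\<in>S. \<phi> h s \<in> X" using vs_facts[OF V] by simp
  have eq: "{tr. \<not> in_Tr \<phi> D1 h tr} = (\<Union>l\<in>{1..h}. {tr. \<phi> l (fst (tr ! (l - 1))) \<notin> ?Phi l})"
    unfolding in_Tr_def by auto
  have "measure_pmf.prob ?M {tr. \<not> in_Tr \<phi> D1 h tr} \<le> (\<Sum>l\<in>{1..h}. measure_pmf.prob ?M {tr. \<phi> l (fst (tr ! (l - 1))) \<notin> ?Phi l})"
    unfolding eq by (intro measure_pmf.finite_measure_subadditive_finite) auto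
  also have "\<dots> \<le> (\<Sum>l\<in>{1..h}. real (card X) * \<tau>)"
  proof (intro sum_mono)
    fix l assume l: "l \<in> {1..h}"
    have "measure_pmf.prob ?M {tr. \<phi> l (fst (tr ! (l - 1))) \<notin> ?Phi l}
        = measure_pmf.prob ?M {tr. \<phi> l (fst (tr ! (l - 1))) \<in> X - ?Phi l \<and> True}"
    proof (rule prob_cong_supp)
      fix tr assume "tr \<in> set_pmf ?M"
      from traj_suppV[OF V this] l h have "fst (tr ! (l - 1)) \<in> S" by auto
      hence "\<phi> l (fst (tr ! (l - 1))) \<in> X" using phiX l h by auto
      thus "tr \<in> {tr. \<phi> l (fst (tr ! (l - 1))) \<notin> ?Phi l} \<longleftrightarrow> tr \<in> {tr. \<phi> l (fst (tr ! (l - 1))) \<in> X - ?Phi l \<and> True}"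
        by auto
    qed
    also have "\<dots> = (\<Sum>x\<in>X - ?Phi l. measure_pmf.prob ?M {tr. \<phi> l (fst (tr ! (l - 1))) = x \<and> True})"
      using finX by (intro sum_prob[symmetric]) auto
    also have "\<dots> \<le> (\<Sum>x\<in>X - ?Phi l. \<tau>)"
    proof (intro sum_mono)
      fix x assume x: "x \<in> X - ?Phi l"
      have lH: "l \<in> {1..H}" using l h by auto
      have xX: "x \<in> X" using x by simp
      from g lH xX have imp: "measure_pmf.prob ?M {tr. \<phi> l (fst (tr ! (l - 1))) = x} \<ge> \<tau> \<longrightarrow>
          (\<exists>tr'\<in>set D1. \<phi> l (fst (tr' ! (l - 1))) = x)" unfolding good1_def by blast
      have "\<not> (\<exists>tr'\<in>set D1. \<phi> l (fst (tr' ! (l - 1))) = x)" using x by blast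
      hence "\<not> measure_pmf.prob ?M {tr. \<phi> l (fst (tr ! (l - 1))) = x} \<ge> \<tau>" using imp by blast
      thus "measure_pmf.prob ?M {tr. \<phi> l (fst (tr ! (l - 1))) = x \<and> True} \<le> \<tau>" by simp
    qed
    also have "\<dots> = real (card (X - ?Phi l)) * \<tau>" by simp
    also have "\<dots> \<le> real (card X) * \<tau>" using finX tau by (intro mult_right_mono) (auto intro: card_mono)
    finally show "measure_pmf.prob ?M {tr. \<phi> l (fst (tr ! (l - 1))) \<notin> ?Phi l} \<le> real (card X) * \<tau>" .
  qed
  also have "\<dots> = real h * (real (card X) * \<tau>)" by simp
  also have "\<dots> \<le> real H * (real (card X) * \<tau>)" using h tau by (intro mult_right_mono) auto
  finally show ?thesis by (simp add: mult.assoc)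
qed

lemma bad1:
  assumes V: "valid_setting S A X \<rho> P r \<pi>E \<phi> H"
  shows "measure_pmf.prob (replicate_pmf k (EDist \<rho> P \<pi>E H)) {D1. \<not> good1 X \<rho> P \<pi>E \<phi> H \<tau> D1}
     \<le> real H * real (card X) * exp (- \<tau> * k)"
proof -
  let ?M = "EDist \<rho> P \<pi>E H"
  let ?d = "\<lambda>l x. measure_pmf.prob ?M {tr. \<phi> l (fst (tr ! (l - 1))) = x}"
  let ?F = "\<lambda>(l,x). {D1. ?d l x \<ge> \<tau> \<and> (\<forall>tr'\<in>set D1. \<not> \<phi> l (fst (tr' ! (l - 1))) = x)}"
  let ?I = "{1..H} \<times> X"
  have finX: "finite X" using vs_facts[OF V] by simp
  have eq: "{D1. \<not> good1 X \<rho> P \<pi>E \<phi> H \<tau> D1} = (\<Union>i\<in>?I. ?F i)" unfolding good1_def by auto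
  have "measure_pmf.prob (replicate_pmf k ?M) (\<Union>i\<in>?I. ?F i) \<le> (\<Sum>i\<in>?I. measure_pmf.prob (replicate_pmf k ?M) (?F i))"
    using finX by (intro measure_pmf.finite_measure_subadditive_finite) auto
  also have "\<dots> \<le> (\<Sum>i\<in>?I. exp (- \<tau> * k))"
  proof (intro sum_mono)
    fix i assume "i \<in> ?I"
    obtain l x where i: "i = (l, x)" by fastforce
    have "measure_pmf.prob (replicate_pmf k ?M) {D1. ?d l x \<ge> \<tau> \<and> (\<forall>tr'\<in>set D1. \<not> \<phi> l (fst (tr' ! (l - 1))) = x)}
        \<le> exp (- \<tau> * k)"
    proof (cases "?d l x \<ge> \<tau>")
      case False
      hence emp: "{D1. ?d l x \<ge> \<tau> \<and> (\<forall>tr'\<in>set D1. \<not> \<phi> l (fst (tr' ! (l - 1))) = x)} = {}" by auto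
      show ?thesis by (simp only: emp measure_empty) simp
    next
      case True
      hence "{D1. ?d l x \<ge> \<tau> \<and> (\<forall>tr'\<in>set D1. \<not> \<phi> l (fst (tr' ! (l - 1))) = x)}
          = {D1. \<forall>tr'\<in>set D1. \<not> \<phi> l (fst (tr' ! (l - 1))) = x}" by auto
      have "measure_pmf.prob (replicate_pmf k ?M) {D1. ?d l x \<ge> \<tau> \<and> (\<forall>tr'\<in>set D1. \<not> \<phi> l (fst (tr' ! (l - 1))) = x)}
          = (1 - ?d l x) ^ k"
        unfolding \<open>{D1. ?d l x \<ge> \<tau> \<and> (\<forall>tr'\<in>set D1. \<not> \<phi> l (fst (tr' ! (l - 1))) = x)}
          = {D1. \<forall>tr'\<in>set D1. \<not> \<phi> l (fst (tr' ! (l - 1))) = x}\<close>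
        by (rule all_miss)
      also have "\<dots> \<le> exp (- ?d l x) ^ k"
      proof (rule power_mono)
        show "1 - ?d l x \<le> exp (- ?d l x)" using exp_ge_add_one_self[of "- ?d l x"] by simp
        show "0 \<le> 1 - ?d l x" by simp
      qed
      also have "\<dots> = exp (- ?d l x * k)" by (simp add: exp_of_nat_mult[symmetric] mult.commute)
      also have "\<dots> \<le> exp (- \<tau> * k)" using True by (intro exp_mono) (simp add: mult_right_mono)
      finally show ?thesis .
    qed
    thus "measure_pmf.prob (replicate_pmf k ?M) (?F i) \<le> exp (- \<tau> * k)" using i by simp
  qed
  also have "\<dots> = real H * real (card X) * exp (- \<tau> * k)" by (simp add: card_cartesian_product)
  finally show ?thesis unfolding eq .
qed

lemma sum_q:
  assumes "finite X" "finite A"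
  shows "(\<Sum>x\<in>X. \<Sum>a\<in>A. measure_pmf.prob M {tr. \<phi> h (fst (tr ! (h - 1))) = x \<and> snd (tr ! (h - 1)) = a \<and> F tr})
       \<le> measure_pmf.prob M {tr. F tr}"
proof -
  have "(\<Sum>x\<in>X. \<Sum>a\<in>A. measure_pmf.prob M {tr. \<phi> h (fst (tr ! (h - 1))) = x \<and> snd (tr ! (h - 1)) = a \<and> F tr})
     = (\<Sum>p\<in>X \<times> A. measure_pmf.prob M {tr. (\<phi> h (fst (tr ! (h - 1))), snd (tr ! (h - 1))) = p \<and> F tr})"
    by (simp add: sum.cartesian_product split_def prod_eq_iff)
  also have "\<dots> = measure_pmf.prob M {tr. (\<phi> h (fst (tr ! (h - 1))), snd (tr ! (h - 1))) \<in> X \<times> A \<and> F tr}"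
    using assms by (intro sum_prob) auto
  also have "\<dots> \<le> measure_pmf.prob M {tr. F tr}" by (intro measure_pmf.finite_measure_mono) auto
  finally show ?thesis .
qed

lemma q_le_r:
  "measure_pmf.prob M {tr. \<phi> h (fst (tr ! (h - 1))) = x \<and> snd (tr ! (h - 1)) = a \<and> F tr}
    \<le> measure_pmf.prob M {tr. \<phi> h (fst (tr ! (h - 1))) = x \<and> snd (tr ! (h - 1)) = a}"
  by (intro measure_pmf.finite_measure_mono) auto

lemma card_q:
  assumes V: "valid_setting S A X \<rho> P r \<pi>E \<phi> H" and h: "h \<in> {1..H}"
  shows "card {a\<in>A. measure_pmf.prob (EDist \<rho> P \<pi>E H) {tr. \<phi> h (fst (tr ! (h - 1))) = x \<and> snd (tr ! (h - 1)) = a \<and> F tr} \<noteq> 0} \<le> 1"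
proof -
  let ?M = "EDist \<rho> P \<pi>E H"
  have finA: "finite A" using vs_facts[OF V] by simp
  have "{a\<in>A. measure_pmf.prob ?M {tr. \<phi> h (fst (tr ! (h - 1))) = x \<and> snd (tr ! (h - 1)) = a \<and> F tr} \<noteq> 0}
     \<subseteq> {a\<in>A. measure_pmf.prob ?M {tr. \<phi> h (fst (tr ! (h - 1))) = x \<and> snd (tr ! (h - 1)) = a} \<noteq> 0}"
  proof (rule subsetI)
    fix a assume "a \<in> {a\<in>A. measure_pmf.prob ?M {tr. \<phi> h (fst (tr ! (h - 1))) = x \<and> snd (tr ! (h - 1)) = a \<and> F tr} \<noteq> 0}"
    hence a: "a \<in> A" and ne: "measure_pmf.prob ?M {tr. \<phi> h (fst (tr ! (h - 1))) = x \<and> snd (tr ! (h - 1)) = a \<and> F tr} \<noteq> 0" by auto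
    have le: "measure_pmf.prob ?M {tr. \<phi> h (fst (tr ! (h - 1))) = x \<and> snd (tr ! (h - 1)) = a \<and> F tr}
      \<le> measure_pmf.prob ?M {tr. \<phi> h (fst (tr ! (h - 1))) = x \<and> snd (tr ! (h - 1)) = a}" by (rule q_le_r)
    have "0 \<le> measure_pmf.prob ?M {tr. \<phi> h (fst (tr ! (h - 1))) = x \<and> snd (tr ! (h - 1)) = a \<and> F tr}" by simp
    hence "measure_pmf.prob ?M {tr. \<phi> h (fst (tr ! (h - 1))) = x \<and> snd (tr ! (h - 1)) = a} \<noteq> 0"
      using le ne by linarith
    thus "a \<in> {a\<in>A. measure_pmf.prob ?M {tr. \<phi> h (fst (tr ! (h - 1))) = x \<and> snd (tr ! (h - 1)) = a} \<noteq> 0}"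
      using a by simp
  qed
  hence "card {a\<in>A. measure_pmf.prob ?M {tr. \<phi> h (fst (tr ! (h - 1))) = x \<and> snd (tr ! (h - 1)) = a \<and> F tr} \<noteq> 0}
     \<le> card {a\<in>A. measure_pmf.prob ?M {tr. \<phi> h (fst (tr ! (h - 1))) = x \<and> snd (tr ! (h - 1)) = a} \<noteq> 0}"
    using finA by (intro card_mono) auto
  also have "\<dots> \<le> 1" by (rule det_card[OF V h])
  finally show ?thesis .
qed

lemma final_det:
  assumes V: "valid_setting S A X \<rho> P r \<pi>E \<phi> H"
    and D1: "D1 \<in> set_pmf (replicate_pmf k (EDist \<rho> P \<pi>E H))"
    and k: "k > 0" and nn: "nn > 0" and m: "m = 2 * k" and lenD: "length Denv = nn"
    and b1: "0 < \<beta>1" and b2: "0 < \<beta>2" and L: "0 \<le> L" and tau: "0 \<le> \<tau>"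
    and g1: "good1 X \<rho> P \<pi>E \<phi> H \<tau> D1"
    and ok2: "\<forall>h\<in>{1..H}. \<forall>x\<in>X. \<forall>a\<in>A. okf k
        (measure_pmf.prob (EDist \<rho> P \<pi>E H) {tr. \<phi> h (fst (tr ! (h - 1))) = x \<and> snd (tr ! (h - 1)) = a \<and> \<not> in_Tr \<phi> D1 h tr})
        (length (filter (\<lambda>tr. \<phi> h (fst (tr ! (h - 1))) = x \<and> snd (tr ! (h - 1)) = a \<and> \<not> in_Tr \<phi> D1 h tr) D1c)) \<beta>2 L"
    and ok3: "\<forall>h\<in>{1..H}. \<forall>x\<in>X. \<forall>a\<in>A. okf nn
        (measure_pmf.prob (traj_dist \<rho> P (lift_policy (abs_bc A \<phi> D1) \<phi>) H) {tr. \<phi> h (fst (tr ! (h - 1))) = x \<and> snd (tr ! (h - 1)) = a \<and> in_Tr \<phi> D1 h tr})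
        (length (filter (\<lambda>tr. \<phi> h (fst (tr ! (h - 1))) = x \<and> snd (tr ! (h - 1)) = a \<and> in_Tr \<phi> D1 h tr) Denv)) \<beta>1 L"
  shows "total_err S A X \<rho> P \<pi>E \<phi> H m D1 D1c Denv
     \<le> real H * (\<beta>1 + real (card X) * (L / (\<beta>1 * nn))) + real H * (\<beta>2 * (real H * real (card X) * \<tau>) + real (card X) * (L / (\<beta>2 * k)))"
proof -
  let ?M = "EDist \<rho> P \<pi>E H"
  let ?Pi = "traj_dist \<rho> P (lift_policy (abs_bc A \<phi> D1) \<phi>) H"
  let ?q1 = "\<lambda>h x a. measure_pmf.prob ?M {tr. \<phi> h (fst (tr ! (h - 1))) = x \<and> snd (tr ! (h - 1)) = a \<and> in_Tr \<phi> D1 h tr}"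
  let ?q2 = "\<lambda>h x a. measure_pmf.prob ?M {tr. \<phi> h (fst (tr ! (h - 1))) = x \<and> snd (tr ! (h - 1)) = a \<and> \<not> in_Tr \<phi> D1 h tr}"
  let ?rr = "\<lambda>h x a. measure_pmf.prob ?M {tr. \<phi> h (fst (tr ! (h - 1))) = x \<and> snd (tr ! (h - 1)) = a}"
  let ?c1 = "\<lambda>h x a. length (filter (\<lambda>tr. \<phi> h (fst (tr ! (h - 1))) = x \<and> snd (tr ! (h - 1)) = a \<and> in_Tr \<phi> D1 h tr) Denv)"
  let ?c2 = "\<lambda>h x a. length (filter (\<lambda>tr. \<phi> h (fst (tr ! (h - 1))) = x \<and> snd (tr ! (h - 1)) = a \<and> \<not> in_Tr \<phi> D1 h tr) D1c)"
  let ?d1 = "\<lambda>h x a. real (?c1 h x a) / nn - ?q1 h x a"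
  let ?d2 = "\<lambda>h x a. real (?c2 h x a) / k - ?q2 h x a"
  let ?K = "real (card X)"
  have finX: "finite X" and finA: "finite A" using vs_facts[OF V] by auto
  have pt: "\<bar>est \<phi> m D1 D1c Denv h x a - abs_occ S \<rho> P \<pi>E \<phi> H h x a\<bar> \<le> \<bar>?d1 h x a\<bar> + \<bar>?d2 h x a\<bar>"
    if h: "h \<in> {1..H}" for h x a
  proof -
    have e1: "est \<phi> m D1 D1c Denv h x a = real (?c1 h x a) / nn + real (?c2 h x a) / k"
      unfolding est_def lenD m by simp
    have e2: "abs_occ S \<rho> P \<pi>E \<phi> H h x a = ?q1 h x a + ?q2 h x a" by (rule occ_split[OF V h])
    show ?thesis unfolding e1 e2 by (rule abs_diff_triangle_ineq)
  qed
  have dev1: "\<bar>?d1 h x a\<bar> \<le> (if ?q1 h x a = 0 then 0 else \<beta>1 * ?q1 h x a + L / (\<beta>1 * nn))"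
    if h: "h \<in> {1..H}" and x: "x \<in> X" and a: "a \<in> A" for h x a
  proof -
    have "1 \<le> h" using h by simp
    from q1_eq[OF V D1 this] have e: "measure_pmf.prob ?Pi {tr. \<phi> h (fst (tr ! (h - 1))) = x \<and> snd (tr ! (h - 1)) = a \<and> in_Tr \<phi> D1 h tr} = ?q1 h x a" .
    from ok3 h x a have "okf nn (measure_pmf.prob ?Pi {tr. \<phi> h (fst (tr ! (h - 1))) = x \<and> snd (tr ! (h - 1)) = a \<and> in_Tr \<phi> D1 h tr}) (?c1 h x a) \<beta>1 L" by blast
    hence "okf nn (?q1 h x a) (?c1 h x a) \<beta>1 L" unfolding e .
    from okf_dev[OF this nn b1] show ?thesis by simp
  qed
  have dev2: "\<bar>?d2 h x a\<bar> \<le> (if ?q2 h x a = 0 then 0 else \<beta>2 * ?q2 h x a + L / (\<beta>2 * k))"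
    if h: "h \<in> {1..H}" and x: "x \<in> X" and a: "a \<in> A" for h x a
  proof -
    from ok2 h x a have "okf k (?q2 h x a) (?c2 h x a) \<beta>2 L" by simp
    from okf_dev[OF this k b2] show ?thesis by simp
  qed
  have per: "(\<Sum>x\<in>X. \<Sum>a\<in>A. \<bar>est \<phi> m D1 D1c Denv h x a - abs_occ S \<rho> P \<pi>E \<phi> H h x a\<bar>)
      \<le> (\<beta>1 + ?K * (L / (\<beta>1 * nn))) + (\<beta>2 * (real H * ?K * \<tau>) + ?K * (L / (\<beta>2 * k)))"
    if h: "h \<in> {1..H}" for h
  proof -
    have "(\<Sum>x\<in>X. \<Sum>a\<in>A. \<bar>est \<phi> m D1 D1c Denv h x a - abs_occ S \<rho> P \<pi>E \<phi> H h x a\<bar>)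
       \<le> (\<Sum>x\<in>X. \<Sum>a\<in>A. \<bar>?d1 h x a\<bar> + \<bar>?d2 h x a\<bar>)"
      by (intro sum_mono pt h)
    also have "\<dots> = (\<Sum>x\<in>X. \<Sum>a\<in>A. \<bar>?d1 h x a\<bar>) + (\<Sum>x\<in>X. \<Sum>a\<in>A. \<bar>?d2 h x a\<bar>)"
      by (simp add: sum.distrib)
    also have "(\<Sum>x\<in>X. \<Sum>a\<in>A. \<bar>?d1 h x a\<bar>) \<le> \<beta>1 * (\<Sum>x\<in>X. \<Sum>a\<in>A. ?q1 h x a) + ?K * (L / (\<beta>1 * nn))"
    proof (rule sum_dev[OF finX finA, where r="?rr h"])
      show "card {a\<in>A. ?rr h x a \<noteq> 0} \<le> 1" for x by (rule det_card[OF V h])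
      show "0 \<le> ?q1 h x a \<and> ?q1 h x a \<le> ?rr h x a" for x a
        using q_le_r[of ?M \<phi> h x a "\<lambda>tr. in_Tr \<phi> D1 h tr"] by simp
      show "\<bar>?d1 h x a\<bar> \<le> (if ?q1 h x a = 0 then 0 else \<beta>1 * ?q1 h x a + L / (\<beta>1 * nn))" if "x \<in> X" "a \<in> A" for x a
        by (rule dev1[OF h that])
      show "0 \<le> L / (\<beta>1 * nn)" using L b1 nn by simp
      show "0 \<le> \<beta>1" using b1 by simp
    qed
    also have "\<beta>1 * (\<Sum>x\<in>X. \<Sum>a\<in>A. ?q1 h x a) \<le> \<beta>1 * 1"
    proof -
      have "(\<Sum>x\<in>X. \<Sum>a\<in>A. ?q1 h x a) \<le> measure_pmf.prob ?M {tr. in_Tr \<phi> D1 h tr}"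
        by (rule sum_q[OF finX finA])
      also have "\<dots> \<le> 1" by simp
      finally show ?thesis using b1 by (intro mult_left_mono) auto
    qed
    also have "(\<Sum>x\<in>X. \<Sum>a\<in>A. \<bar>?d2 h x a\<bar>) \<le> \<beta>2 * (\<Sum>x\<in>X. \<Sum>a\<in>A. ?q2 h x a) + ?K * (L / (\<beta>2 * k))"
    proof (rule sum_dev[OF finX finA, where r="?rr h"])
      show "card {a\<in>A. ?rr h x a \<noteq> 0} \<le> 1" for x by (rule det_card[OF V h])
      show "0 \<le> ?q2 h x a \<and> ?q2 h x a \<le> ?rr h x a" for x a
        using q_le_r[of ?M \<phi> h x a "\<lambda>tr. \<not> in_Tr \<phi> D1 h tr"] by simp
      show "\<bar>?d2 h x a\<bar> \<le> (if ?q2 h x a = 0 then 0 else \<beta>2 * ?q2 h x a + L / (\<beta>2 * k))" if "x \<in> X" "a \<in> A" for x a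
        by (rule dev2[OF h that])
      show "0 \<le> L / (\<beta>2 * k)" using L b2 k by simp
      show "0 \<le> \<beta>2" using b2 by simp
    qed
    also have "\<beta>2 * (\<Sum>x\<in>X. \<Sum>a\<in>A. ?q2 h x a) \<le> \<beta>2 * (real H * ?K * \<tau>)"
    proof -
      have "(\<Sum>x\<in>X. \<Sum>a\<in>A. ?q2 h x a) \<le> measure_pmf.prob ?M {tr. \<not> in_Tr \<phi> D1 h tr}"
        by (rule sum_q[OF finX finA])
      also have "\<dots> \<le> real H * ?K * \<tau>" using h by (intro notTr[OF V _ tau g1]) auto
      finally show ?thesis using b2 by (intro mult_left_mono) auto
    qed
    finally show ?thesis by simp
  qed
  have "total_err S A X \<rho> P \<pi>E \<phi> H m D1 D1c Denv
      \<le> (\<Sum>h=1..H. (\<beta>1 + ?K * (L / (\<beta>1 * nn))) + (\<beta>2 * (real H * ?K * \<tau>) + ?K * (L / (\<beta>2 * k))))"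
    unfolding total_err_def by (intro sum_mono per) auto
  also have "\<dots> = real H * (\<beta>1 + ?K * (L / (\<beta>1 * nn))) + real H * (\<beta>2 * (real H * ?K * \<tau>) + ?K * (L / (\<beta>2 * k)))"
    by (simp add: algebra_simps)
  finally show ?thesis .
qed

lemma pmf_subadd: "measure_pmf.prob M (A \<union> B) \<le> measure_pmf.prob M A + measure_pmf.prob M B"
  by (rule measure_subadditive) auto

lemma prob_bad:
  assumes V: "valid_setting S A X \<rho> P r \<pi>E \<phi> H"
    and b1: "0 < \<beta>1" "\<beta>1 \<le> 1" and b2: "0 < \<beta>2" "\<beta>2 \<le> 1"
  shows "measure_pmf.prob (sample_law A \<rho> P \<pi>E \<phi> H m nn)
     {t. \<not> good1 X \<rho> P \<pi>E \<phi> H \<tau> (fst t) \<or>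
        (\<exists>h\<in>{1..H}. \<exists>x\<in>X. \<exists>a\<in>A. \<not> okf (m div 2)
        (measure_pmf.prob (EDist \<rho> P \<pi>E H) {tr. \<phi> h (fst (tr ! (h - 1))) = x \<and> snd (tr ! (h - 1)) = a \<and> \<not> in_Tr \<phi> (fst t) h tr})
        (length (filter (\<lambda>tr. \<phi> h (fst (tr ! (h - 1))) = x \<and> snd (tr ! (h - 1)) = a \<and> \<not> in_Tr \<phi> (fst t) h tr) (fst (snd t)))) \<beta>2 L) \<or>
        (\<exists>h\<in>{1..H}. \<exists>x\<in>X. \<exists>a\<in>A. \<not> okf nn
        (measure_pmf.prob (traj_dist \<rho> P (lift_policy (abs_bc A \<phi> (fst t)) \<phi>) H) {tr. \<phi> h (fst (tr ! (h - 1))) = x \<and> snd (tr ! (h - 1)) = a \<and> in_Tr \<phi> (fst t) h tr})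
        (length (filter (\<lambda>tr. \<phi> h (fst (tr ! (h - 1))) = x \<and> snd (tr ! (h - 1)) = a \<and> in_Tr \<phi> (fst t) h tr) (snd (snd t)))) \<beta>1 L)}
     \<le> real H * real (card X) * exp (- \<tau> * real (m div 2)) + (2 * real H * real (card X) * exp (-L) + 2 * real H * real (card X) * exp (-L))"
    (is "measure_pmf.prob ?SL {t. ?B1 t \<or> ?B2 (fst t) (fst (snd t)) \<or> ?B3 (fst t) (snd (snd t))} \<le> _")
proof -
  let ?M = "EDist \<rho> P \<pi>E H"
  let ?k = "m div 2"
  let ?R1 = "replicate_pmf ?k ?M"
  let ?R2 = "\<lambda>D1. replicate_pmf nn (traj_dist \<rho> P (lift_policy (abs_bc A \<phi> D1) \<phi>) H)"
  let ?f = "\<lambda>D1. ?R1 \<bind> (\<lambda>D1c. ?R2 D1 \<bind> (\<lambda>Denv. return_pmf (D1, D1c, Denv)))"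
  have SL: "?SL = ?R1 \<bind> ?f" unfolding sample_law_def by simp
  have finX: "finite X" and finA: "finite A" using vs_facts[OF V] by auto
  let ?W1 = "{t. ?B1 t}"
  let ?W23 = "{t. ?B2 (fst t) (fst (snd t)) \<or> ?B3 (fst t) (snd (snd t))}"
  have "measure_pmf.prob ?SL {t. ?B1 t \<or> ?B2 (fst t) (fst (snd t)) \<or> ?B3 (fst t) (snd (snd t))}
      = measure_pmf.prob ?SL (?W1 \<union> ?W23)" by (intro arg_cong[where f="measure_pmf.prob ?SL"]) auto
  also have "\<dots> \<le> measure_pmf.prob ?SL ?W1 + measure_pmf.prob ?SL ?W23"
    by (rule pmf_subadd)
  also have "measure_pmf.prob ?SL ?W1 \<le> real H * real (card X) * exp (- \<tau> * real ?k)"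
  proof -
    have mf: "map_pmf fst ?SL = ?R1" unfolding SL by (simp add: map_bind_pmf bind_return_pmf')
    have "measure_pmf.prob ?SL ?W1 = measure_pmf.prob (map_pmf fst ?SL) {D1. \<not> good1 X \<rho> P \<pi>E \<phi> H \<tau> D1}"
      by (simp add: vimage_def)
    also have "\<dots> \<le> real H * real (card X) * exp (- \<tau> * real ?k)" unfolding mf by (rule bad1[OF V])
    finally show ?thesis .
  qed
  also have "measure_pmf.prob ?SL ?W23 \<le> 2 * real H * real (card X) * exp (-L) + 2 * real H * real (card X) * exp (-L)"
    unfolding SL
  proof (rule bind_prob_le)
    fix D1 assume D1: "D1 \<in> set_pmf ?R1"
    have "measure_pmf.prob (?f D1) ?W23 \<le> measure_pmf.prob (?f D1) ({t. ?B2 D1 (fst (snd t))} \<union> {t. ?B3 D1 (snd (snd t))})"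
      by (rule prob_mono_supp) auto
    also have "\<dots> \<le> measure_pmf.prob (?f D1) {t. ?B2 D1 (fst (snd t))} + measure_pmf.prob (?f D1) {t. ?B3 D1 (snd (snd t))}"
      by (rule pmf_subadd)
    also have "measure_pmf.prob (?f D1) {t. ?B2 D1 (fst (snd t))} \<le> 2 * real H * real (card X) * exp (-L)"
    proof -
      have mf: "map_pmf (\<lambda>t. fst (snd t)) (?f D1) = ?R1" by (simp add: map_bind_pmf bind_return_pmf')
      have "measure_pmf.prob (?f D1) {t. ?B2 D1 (fst (snd t))} = measure_pmf.prob (map_pmf (\<lambda>t. fst (snd t)) (?f D1)) {D1c. ?B2 D1 D1c}"
        by (simp add: vimage_def)
      also have "\<dots> \<le> 2 * real H * real (card X) * exp (-L)" unfolding mf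
      proof (rule union_fail[OF finX finA b2])
        fix h x assume h: "h \<in> {1..H}" and x: "x \<in> X"
        show "card {a\<in>A. measure_pmf.prob ?M {tr. \<phi> h (fst (tr ! (h - 1))) = x \<and> snd (tr ! (h - 1)) = a \<and> \<not> in_Tr \<phi> D1 h tr} \<noteq> 0} \<le> 1"
          by (rule card_q[OF V h])
      qed
      finally show ?thesis .
    qed
    also have "measure_pmf.prob (?f D1) {t. ?B3 D1 (snd (snd t))} \<le> 2 * real H * real (card X) * exp (-L)"
    proof -
      have mf: "map_pmf (\<lambda>t. snd (snd t)) (?f D1) = ?R2 D1" by (simp add: map_bind_pmf bind_return_pmf')
      have "measure_pmf.prob (?f D1) {t. ?B3 D1 (snd (snd t))} = measure_pmf.prob (map_pmf (\<lambda>t. snd (snd t)) (?f D1)) {Denv. ?B3 D1 Denv}"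
        by (simp add: vimage_def)
      also have "\<dots> \<le> 2 * real H * real (card X) * exp (-L)" unfolding mf
      proof (rule union_fail[OF finX finA b1])
        fix h x assume h: "h \<in> {1..H}" and x: "x \<in> X"
        have "1 \<le> h" using h by simp
        have "{a\<in>A. measure_pmf.prob (traj_dist \<rho> P (lift_policy (abs_bc A \<phi> D1) \<phi>) H) {tr. \<phi> h (fst (tr ! (h - 1))) = x \<and> snd (tr ! (h - 1)) = a \<and> in_Tr \<phi> D1 h tr} \<noteq> 0}
          = {a\<in>A. measure_pmf.prob ?M {tr. \<phi> h (fst (tr ! (h - 1))) = x \<and> snd (tr ! (h - 1)) = a \<and> in_Tr \<phi> D1 h tr} \<noteq> 0}"
          using q1_eq[OF V D1 \<open>1 \<le> h\<close>] by simp
        also have "card \<dots> \<le> 1" by (rule card_q[OF V h])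
        finally show "card {a\<in>A. measure_pmf.prob (traj_dist \<rho> P (lift_policy (abs_bc A \<phi> D1) \<phi>) H) {tr. \<phi> h (fst (tr ! (h - 1))) = x \<and> snd (tr ! (h - 1)) = a \<and> in_Tr \<phi> D1 h tr} \<noteq> 0} \<le> 1" .
      qed
      finally show ?thesis .
    qed
    finally show "measure_pmf.prob (?f D1) ?W23 \<le> 2 * real H * real (card X) * exp (-L) + 2 * real H * real (card X) * exp (-L)" by simp
  qed simp
  finally show ?thesis by simp
qed

lemma arithA:
  fixes Hr K \<epsilon> L \<Lambda> n :: real
  assumes "Hr > 0" "K > 0" "\<epsilon> > 0" "0 \<le> L" "L \<le> 2 * \<Lambda>" "n > 0"
    and "n \<ge> 32 * (Hr ^ 2 * K / \<epsilon> ^ 2) * \<Lambda>"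
  shows "Hr * (\<epsilon> / (4 * Hr) + K * (L / (\<epsilon> / (4 * Hr) * n))) \<le> \<epsilon> / 2"
proof -
  have e1: "Hr * (\<epsilon> / (4 * Hr) + K * (L / (\<epsilon> / (4 * Hr) * n))) = \<epsilon> / 4 + 4 * Hr ^ 2 * K * L / (\<epsilon> * n)"
    using assms by (simp add: field_simps power2_eq_square)
  have "\<epsilon> ^ 2 * n \<ge> \<epsilon> ^ 2 * (32 * (Hr ^ 2 * K / \<epsilon> ^ 2) * \<Lambda>)"
    using assms(7) assms(3) by (intro mult_left_mono) auto
  also have "\<epsilon> ^ 2 * (32 * (Hr ^ 2 * K / \<epsilon> ^ 2) * \<Lambda>) = 32 * Hr ^ 2 * K * \<Lambda>"
    using assms(3) by (simp add: field_simps)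
  finally have n1: "32 * Hr ^ 2 * K * \<Lambda> \<le> \<epsilon> ^ 2 * n" .
  have "(16 * Hr ^ 2 * K) * L \<le> (16 * Hr ^ 2 * K) * (2 * \<Lambda>)"
    using assms by (intro mult_left_mono) auto
  also have "\<dots> = 32 * Hr ^ 2 * K * \<Lambda>" by simp
  finally have n3: "16 * Hr ^ 2 * K * L \<le> 32 * Hr ^ 2 * K * \<Lambda>" .
  have n2: "16 * Hr ^ 2 * K * L \<le> \<epsilon> ^ 2 * n" using order_trans[OF n3 n1] .
  have "4 * Hr ^ 2 * K * L / (\<epsilon> * n) \<le> \<epsilon> / 4"
    using n2 assms(3,6) by (simp add: divide_le_eq field_simps power2_eq_square)
  thus ?thesis using e1 by simp
qed

lemma arithB:
  fixes s K \<epsilon> L \<Lambda> k :: real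
  assumes "s > 0" "K > 0" "\<epsilon> > 0" "0 \<le> L" "L \<le> 2 * \<Lambda>" "k > 0"
    and "2 * k \<ge> 32 * (s ^ 3 * K / \<epsilon>) * \<Lambda>"
  shows "s ^ 2 * ((1 / s) * (s ^ 2 * K * (L / k)) + K * (L / ((1 / s) * k))) \<le> \<epsilon> / 2"
proof -
  have e1: "s ^ 2 * ((1 / s) * (s ^ 2 * K * (L / k)) + K * (L / ((1 / s) * k))) = 2 * s ^ 3 * K * L / k"
    using assms by (simp add: field_simps power2_eq_square power3_eq_cube)
  have "\<epsilon> * (2 * k) \<ge> \<epsilon> * (32 * (s ^ 3 * K / \<epsilon>) * \<Lambda>)"
    using assms(7) assms(3) by (intro mult_left_mono) auto
  also have "\<epsilon> * (32 * (s ^ 3 * K / \<epsilon>) * \<Lambda>) = 32 * s ^ 3 * K * \<Lambda>"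
    using assms(3) by (simp add: field_simps)
  finally have n1: "32 * s ^ 3 * K * \<Lambda> \<le> \<epsilon> * (2 * k)" .
  have "(8 * s ^ 3 * K) * L \<le> (8 * s ^ 3 * K) * (2 * \<Lambda>)"
    using assms by (intro mult_left_mono) auto
  also have "\<dots> = 16 * s ^ 3 * K * \<Lambda>" by simp
  finally have "8 * s ^ 3 * K * L \<le> 16 * s ^ 3 * K * \<Lambda>" .
  moreover have "0 \<le> s ^ 3 * K * \<Lambda>" using assms by simp
  ultimately have "8 * s ^ 3 * K * L \<le> 32 * s ^ 3 * K * \<Lambda>" by linarith
  hence "8 * s ^ 3 * K * L \<le> \<epsilon> * (2 * k)" using n1 by (rule order_trans)
  hence n2: "4 * s ^ 3 * K * L \<le> \<epsilon> * k" by (simp add: algebra_simps)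
  have "2 * s ^ 3 * K * L / k \<le> \<epsilon> / 2"
    using n2 assms(6) by (simp add: divide_le_eq field_simps)
  thus ?thesis using e1 by simp
qed

lemma supp_SL:
  assumes "t \<in> set_pmf (sample_law A \<rho> P \<pi>E \<phi> H m nn)"
  shows "fst t \<in> set_pmf (replicate_pmf (m div 2) (EDist \<rho> P \<pi>E H)) \<and> length (snd (snd t)) = nn"
  using assms unfolding sample_law_def by (auto simp: set_replicate_pmf)

lemma main13:
  assumes V: "valid_setting S A X \<rho> P r \<pi>E \<phi> H" and H5: "H \<ge> 5" and ev: "even m"
    and e: "0 < \<epsilon>" "\<epsilon> < 1" and d: "0 < \<delta>" "\<delta> < 1"
    and mb: "real m \<ge> 32 * (real H powr (3/2) * real (card X) / \<epsilon>) * ln (real (card X) * real H / \<delta>)"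
    and nb: "real nn \<ge> 32 * (real H ^ 2 * real (card X) / \<epsilon> ^ 2) * ln (real (card X) * real H / \<delta>)"
  shows "measure_pmf.prob (sample_law A \<rho> P \<pi>E \<phi> H m nn)
            {(D1, D1c, Denv). total_err S A X \<rho> P \<pi>E \<phi> H m D1 D1c Denv \<le> \<epsilon>} \<ge> 1 - \<delta>"
proof -
  define K where "K = real (card X)"
  define Hr where "Hr = real H"
  define Lam where "Lam = ln (K * Hr / \<delta>)"
  define L where "L = ln (5 * (K * Hr / \<delta>))"
  define k where "k = m div 2"
  define \<tau> where "\<tau> = L / real k"
  define s where "s = sqrt Hr"
  define \<beta>1 where "\<beta>1 = \<epsilon> / (4 * Hr)"
  define \<beta>2 where "\<beta>2 = 1 / s"
  have finX: "finite X" and neX: "X \<noteq> {}" using vs_facts[OF V] by auto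
  have K1: "K \<ge> 1" unfolding K_def using finX neX by (simp add: Suc_le_eq card_gt_0_iff)
  have H5r: "Hr \<ge> 5" unfolding Hr_def using H5 by simp
  have KH: "K * Hr \<ge> 5" using K1 H5r by (metis mult_1 mult_mono order.trans linorder_not_le zero_le_one not_less order_less_imp_le one_le_numeral)
  have KHd: "K * Hr / \<delta> \<ge> 5"
  proof -
    have "K * Hr * \<delta> \<le> K * Hr * 1" using d KH by (intro mult_left_mono) auto
    hence "K * Hr \<le> K * Hr / \<delta>" using d by (simp add: le_divide_eq)
    thus ?thesis using KH by simp
  qed
  have Lam5: "ln 5 \<le> Lam" unfolding Lam_def using KHd by simp
  have ln5: "0 < ln (5::real)" by simp
  have Lsum: "L = ln 5 + Lam" unfolding L_def Lam_def using KHd K1 H5r d ln_mult[of 5 "K * Hr / \<delta>"] by simp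
  have L2: "L \<le> 2 * Lam" using Lsum Lam5 by simp
  have Lpos: "0 < L" using Lsum Lam5 ln5 by linarith
  have Lampos: "0 < Lam" using Lam5 ln5 by linarith
  have expL: "exp (-L) = \<delta> / (5 * K * Hr)"
  proof -
    have "exp L = 5 * (K * Hr / \<delta>)" unfolding L_def using KHd by simp
    thus ?thesis using d K1 H5r by (simp add: exp_minus field_simps)
  qed
  have s0: "s > 0" and s1: "s \<ge> 1" unfolding s_def using H5r by auto
  have Hs: "Hr = s ^ 2" unfolding s_def using H5r by simp
  have pw: "real H powr (3/2) = s ^ 3"
  proof -
    have "Hr powr (3/2) = Hr powr (1 + 1/2)" by simp
    also have "\<dots> = Hr * Hr powr (1/2)" using H5r powr_add[of Hr 1 "1/2"] by simp
    also have "\<dots> = s ^ 2 * s"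
    proof -
      have "Hr powr (1/2) = s" unfolding s_def using H5r by (simp add: powr_half_sqrt)
      thus ?thesis by (simp only: Hs[symmetric])
    qed
    finally show ?thesis unfolding Hr_def by (simp add: power3_eq_cube power2_eq_square)
  qed
  have mpos: "real m > 0"
  proof -
    have "0 < 32 * (real H powr (3/2) * real (card X) / \<epsilon>) * ln (real (card X) * real H / \<delta>)"
      using e Lampos K1 s0 unfolding pw Lam_def K_def Hr_def by simp
    thus ?thesis using mb by linarith
  qed
  have k0: "k > 0" and mk: "m = 2 * k" using mpos ev unfolding k_def by auto
  have npos: "nn > 0"
  proof -
    have "0 < 32 * (real H ^ 2 * real (card X) / \<epsilon> ^ 2) * ln (real (card X) * real H / \<delta>)"
      using e Lampos K1 H5 unfolding Lam_def K_def Hr_def by simp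
    thus ?thesis using nb by simp
  qed
  have b1: "0 < \<beta>1" "\<beta>1 \<le> 1" unfolding \<beta>1_def using e H5r by auto
  have b2: "0 < \<beta>2" "\<beta>2 \<le> 1" unfolding \<beta>2_def using s0 s1 by auto
  have tk: "\<tau> * real k = L" unfolding \<tau>_def using k0 by simp
  have tau0: "0 \<le> \<tau>" unfolding \<tau>_def using Lpos by simp
  let ?SL = "sample_law A \<rho> P \<pi>E \<phi> H m nn"
  let ?W = "{t. \<not> good1 X \<rho> P \<pi>E \<phi> H \<tau> (fst t) \<or>
        (\<exists>h\<in>{1..H}. \<exists>x\<in>X. \<exists>a\<in>A. \<not> okf (m div 2)
        (measure_pmf.prob (EDist \<rho> P \<pi>E H) {tr. \<phi> h (fst (tr ! (h - 1))) = x \<and> snd (tr ! (h - 1)) = a \<and> \<not> in_Tr \<phi> (fst t) h tr})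
        (length (filter (\<lambda>tr. \<phi> h (fst (tr ! (h - 1))) = x \<and> snd (tr ! (h - 1)) = a \<and> \<not> in_Tr \<phi> (fst t) h tr) (fst (snd t)))) \<beta>2 L) \<or>
        (\<exists>h\<in>{1..H}. \<exists>x\<in>X. \<exists>a\<in>A. \<not> okf nn
        (measure_pmf.prob (traj_dist \<rho> P (lift_policy (abs_bc A \<phi> (fst t)) \<phi>) H) {tr. \<phi> h (fst (tr ! (h - 1))) = x \<and> snd (tr ! (h - 1)) = a \<and> in_Tr \<phi> (fst t) h tr})
        (length (filter (\<lambda>tr. \<phi> h (fst (tr ! (h - 1))) = x \<and> snd (tr ! (h - 1)) = a \<and> in_Tr \<phi> (fst t) h tr) (snd (snd t)))) \<beta>1 L)}"
  have PW: "measure_pmf.prob ?SL ?W \<le> \<delta>"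
  proof -
    have "measure_pmf.prob ?SL ?W \<le> real H * real (card X) * exp (- \<tau> * real (m div 2))
        + (2 * real H * real (card X) * exp (-L) + 2 * real H * real (card X) * exp (-L))"
      by (rule prob_bad[OF V b1 b2])
    also have "\<dots> = 5 * Hr * K * exp (-L)" using tk unfolding k_def Hr_def K_def by simp
    also have "\<dots> = \<delta>" unfolding expL using K1 H5r by (simp add: field_simps)
    finally show ?thesis .
  qed
  have good: "t \<in> {(D1, D1c, Denv). total_err S A X \<rho> P \<pi>E \<phi> H m D1 D1c Denv \<le> \<epsilon>}"
    if t: "t \<in> set_pmf ?SL" and nW: "t \<in> UNIV - ?W" for t
  proof -
    obtain D1 D1c Denv where tt: "t = (D1, D1c, Denv)" by (cases t) auto
    from supp_SL[OF t] have D1: "D1 \<in> set_pmf (replicate_pmf k (EDist \<rho> P \<pi>E H))" and lenD: "length Denv = nn"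
      unfolding tt k_def by auto
    from nW have g1: "good1 X \<rho> P \<pi>E \<phi> H \<tau> D1"
      and ok2: "\<forall>h\<in>{1..H}. \<forall>x\<in>X. \<forall>a\<in>A. okf k
        (measure_pmf.prob (EDist \<rho> P \<pi>E H) {tr. \<phi> h (fst (tr ! (h - 1))) = x \<and> snd (tr ! (h - 1)) = a \<and> \<not> in_Tr \<phi> D1 h tr})
        (length (filter (\<lambda>tr. \<phi> h (fst (tr ! (h - 1))) = x \<and> snd (tr ! (h - 1)) = a \<and> \<not> in_Tr \<phi> D1 h tr) D1c)) \<beta>2 L"
      and ok3: "\<forall>h\<in>{1..H}. \<forall>x\<in>X. \<forall>a\<in>A. okf nn
        (measure_pmf.prob (traj_dist \<rho> P (lift_policy (abs_bc A \<phi> D1) \<phi>) H) {tr. \<phi> h (fst (tr ! (h - 1))) = x \<and> snd (tr ! (h - 1)) = a \<and> in_Tr \<phi> D1 h tr})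
        (length (filter (\<lambda>tr. \<phi> h (fst (tr ! (h - 1))) = x \<and> snd (tr ! (h - 1)) = a \<and> in_Tr \<phi> D1 h tr) Denv)) \<beta>1 L"
      unfolding tt k_def by auto
    have "total_err S A X \<rho> P \<pi>E \<phi> H m D1 D1c Denv
       \<le> real H * (\<beta>1 + real (card X) * (L / (\<beta>1 * nn))) + real H * (\<beta>2 * (real H * real (card X) * \<tau>) + real (card X) * (L / (\<beta>2 * k)))"
      by (rule final_det[OF V D1 k0 npos mk lenD b1(1) b2(1) _ tau0 g1 ok2 ok3]) (use Lpos in simp)
    also have "real H * (\<beta>1 + real (card X) * (L / (\<beta>1 * nn))) \<le> \<epsilon> / 2"
      unfolding \<beta>1_def Hr_def
    proof (rule arithA)
      show "real nn \<ge> 32 * (real H ^ 2 * real (card X) / \<epsilon> ^ 2) * Lam"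
        using nb unfolding Lam_def K_def Hr_def by simp
    qed (use H5 K1 e Lpos L2 npos in \<open>auto simp: K_def\<close>)
    also have "real H * (\<beta>2 * (real H * real (card X) * \<tau>) + real (card X) * (L / (\<beta>2 * k))) \<le> \<epsilon> / 2"
    proof -
      have eq: "real H * (\<beta>2 * (real H * real (card X) * \<tau>) + real (card X) * (L / (\<beta>2 * k)))
          = s ^ 2 * ((1 / s) * (s ^ 2 * K * (L / k)) + K * (L / ((1 / s) * k)))"
        unfolding \<beta>2_def \<tau>_def K_def using Hs unfolding Hr_def by simp
      have "s ^ 2 * ((1 / s) * (s ^ 2 * K * (L / k)) + K * (L / ((1 / s) * k))) \<le> \<epsilon> / 2"
      proof (rule arithB)
        show "2 * real k \<ge> 32 * (s ^ 3 * K / \<epsilon>) * Lam"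
          using mb mk unfolding pw Lam_def K_def Hr_def by simp
      qed (use s0 K1 e Lpos L2 k0 in auto)
      thus ?thesis using eq by simp
    qed
    finally have "total_err S A X \<rho> P \<pi>E \<phi> H m D1 D1c Denv \<le> \<epsilon>" by simp
    thus ?thesis unfolding tt by simp
  qed
  have "1 - \<delta> \<le> 1 - measure_pmf.prob ?SL ?W" using PW by simp
  also have "\<dots> = measure_pmf.prob ?SL (UNIV - ?W)"
    using measure_pmf.prob_compl[of ?W ?SL] by simp
  also have "\<dots> \<le> measure_pmf.prob ?SL {(D1, D1c, Denv). total_err S A X \<rho> P \<pi>E \<phi> H m D1 D1c Denv \<le> \<epsilon>}"
    by (rule prob_mono_supp) (rule good)
  finally show ?thesis .
qed

theorem lemma13:
  shows "\<exists>C::real. C > 0 \<and>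
    (\<forall>(S::nat set) (A::nat set) (X::nat set) (\<rho>::nat pmf) (P::nat \<Rightarrow> nat \<Rightarrow> nat \<Rightarrow> nat pmf)
      (r::nat \<Rightarrow> nat \<Rightarrow> nat \<Rightarrow> real) (\<pi>E::nat \<Rightarrow> nat \<Rightarrow> nat) (\<phi>::nat \<Rightarrow> nat \<Rightarrow> nat)
      (H::nat) (m::nat) (n'::nat) (\<epsilon>::real) (\<delta>::real).
      valid_setting S A X \<rho> P r \<pi>E \<phi> H \<and> H \<ge> 5 \<and> even m \<and>
      0 < \<epsilon> \<and> \<epsilon> < 1 \<and> 0 < \<delta> \<and> \<delta> < 1 \<and>
      real m \<ge> C * (real H powr (3/2) * real (card X) / \<epsilon>) * ln (real (card X) * real H / \<delta>) \<and>
      real n' \<ge> C * (real H ^ 2 * real (card X) / \<epsilon> ^ 2) * ln (real (card X) * real H / \<delta>)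
      \<longrightarrow> measure_pmf.prob (sample_law A \<rho> P \<pi>E \<phi> H m n')
            {(D1, D1c, Denv). total_err S A X \<rho> P \<pi>E \<phi> H m D1 D1c Denv \<le> \<epsilon>} \<ge> 1 - \<delta>)"
proof (intro exI[of _ "32::real"] conjI allI impI)
  show "(32::real) > 0" by simp
  fix S A X \<rho> P r \<pi>E \<phi> H m n' \<epsilon> \<delta>
  assume "valid_setting S A X \<rho> P r \<pi>E \<phi> H \<and> H \<ge> 5 \<and> even m \<and>
      0 < \<epsilon> \<and> \<epsilon> < 1 \<and> 0 < \<delta> \<and> \<delta> < 1 \<and>
      real m \<ge> 32 * (real H powr (3/2) * real (card X) / \<epsilon>) * ln (real (card X) * real H / \<delta>) \<and>
      real n' \<ge> 32 * (real H ^ 2 * real (card X) / \<epsilon> ^ 2) * ln (real (card X) * real H / \<delta>)"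
  thus "measure_pmf.prob (sample_law A \<rho> P \<pi>E \<phi> H m n')
            {(D1, D1c, Denv). total_err S A X \<rho> P \<pi>E \<phi> H m D1 D1c Denv \<le> \<epsilon>} \<ge> 1 - \<delta>"
    by (elim conjE) (rule main13)
qed

end
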